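(* Under the setup in the context, let $\tilde{\mathbf J}$ be the TDOA-only Fisher information matrix and $\widetilde{\mathrm{CRB}}_{xy}=[\tilde{\mathbf J}^{-1}]_{1,1}+[\tilde{\mathbf J}^{-1}]_{2,2}$, $\widetilde{\mathrm{CRB}}_z=[\tilde{\mathbf J}^{-1}]_{3,3}$. Then almost surely the limits $\widetilde{\mathrm{LCRB}}_{xy}=\lim_{N\to\infty}N\,\widetilde{\mathrm{CRB}}_{xy}$ and $\widetilde{\mathrm{LCRB}}_z=\lim_{N\to\infty}N\,\widetilde{\mathrm{CRB}}_z$ exist and $$\widetilde{\mathrm{LCRB}}_{xy}=\frac{4}{\tilde A},\qquad \widetilde{\mathrm{LCRB}}_z=\frac{B}{\tilde C B-E^2},$$ where $$\tilde A=2\rho\eta\Big(\log\!\Big(\frac{D_{\max}}{h}\Big)\frac{(r+h)^2+r^2}{4r^3(r+h)}-\frac{(1-\chi_{\max})\big(D_{\max}^2+r(r+h)(1+\chi_{\max})\big)}{4r^2D_{\max}^2}\Big),$$ $$B=\frac{\eta\rho}{rR}\log\frac{D_{\max}}{h},\qquad E=\frac{\eta\rho}{r^2}\Big(1-\frac{R-r\chi_{\max}}{D_{\max}}\Big),$$ $$\tilde C=\rho\eta\Big[\frac{(1-\chi_{\max})\big((R+r)^2+D_{\max}^2\big)}{4r^2D_{\max}^2}-\frac{(R^2-r^2)}{2r^3R}\log\frac{D_{\max}}{h}\Big].$$ (Here $\tilde A=\mathrm E[L_i\sin^2\phi_{L,i}\mathbf 1_i]$, $\tilde C=\mathrm E[L_i\cos^2\phi_{L,i}\mathbf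 1_i]$, $B=\mathrm E[L_i\mathbf 1_i]$, $E=\mathrm E[L_i\cos\phi_{L,i}\mathbf 1_i]$.)
   Context: Setup. A receiver lies at distance $r>0$ from the Earth's center, at the point $(0,0,r)$ of Earth-centered coordinates. $N$ satellites are placed independently and uniformly at random on the sphere of radius $R=r+h$ ($h>0$) about the Earth's center. For satellite $i$, $\phi_{E,i}\in[0,\pi]$ is its polar angle measured from the receiver's direction and $\theta_i$ its azimuth; thus $\cos\phi_{E,i}$ is uniform on $[-1,1]$ and $\theta_i$ is uniform on $[0,2\pi)$, independently. The receiver–satellite distance is $D_i=\sqrt{R^2+r^2-2rR\cos\phi_{E,i}}$. The local zenith angle $\phi_{L,i}\in[0,\pi]$ is defined by $D_i\cos\phi_{L,i}=R\cos\phi_{E,i}-r$, $D_i\sin\phi_{L,i}=R\sin\phi_{E,i}$. Fix $\phi_{L,\max}\in(0,\pi/2)$; satellite $i$ is visible iff $\phi_{L,i}\le\phi_{L,\max}$, and $\mathbf 1_i$ denotes the indicator of this event. Let $\zeta=\cos\phi_{L,\max}$, $D_{\max}=-r\zeta+\sqrt{h^2+2hr+r^2\zeta^2}$, and $\chi_{\max}=(R^2+r^2-D_{\max}^2)/(2rR)$. Fix constants $\rho>0$, $\eta>0$ and set $L_i=2\eta\rho/D_i^2$, $u_i=(\sin\phi_{L,i}\cos\theta_i,\ \sin\phi_{L,i}\sin\theta_i,\ \cos\phi_{L,i})^T$. The unknown parameters are the receiver position $(x,y,z)$ and clock offset $T_0$. The TDOA Fisher information matrix is $$\tilde{\mathbf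 J}=\sum_{i=1}^N\mathbf 1_iL_i\begin{pmatrix}u_iu_i^T & u_i\\ u_i^T & 1\end{pmatrix}.$$ *)

theory Defs
  imports "HOL-Probability.Probability"
begin

text \<open>Geometry of a single satellite, given c = cos(phi_E) and azimuth theta.
  R = r + h is the orbit radius.\<close>

definition satD :: "real \<Rightarrow> real \<Rightarrow> real \<Rightarrow> real" where
  "satD r h c = sqrt ((r + h)^2 + r^2 - 2 * r * (r + h) * c)"

text \<open>Local zenith angle phi_L in [0,pi], determined by
  D cos phi_L = R cos phi_E - r and D sin phi_L = R sin phi_E (sin phi_E >= 0).\<close>
definition phiL :: "real \<Rightarrow> real \<Rightarrow> real \<Rightarrow> real" where
  "phiL r h c = arccos (((r + h) * c - r) / satD r h c)"

definition visible :: "real \<Rightarrow> real \<Rightarrow> real \<Rightarrow> real \<Rightarrow> bool" where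
  "visible r h phiLmax c \<longleftrightarrow> phiL r h c \<le> phiLmax"

definition satL :: "real \<Rightarrow> real \<Rightarrow> real \<Rightarrow> real \<Rightarrow> real \<Rightarrow> real" where
  "satL \<rho> \<eta> r h c = 2 * \<eta> * \<rho> / (satD r h c)^2"

definition augU :: "real \<Rightarrow> real \<Rightarrow> real \<Rightarrow> real \<Rightarrow> real^4" where
  "augU r h c \<theta> = vector [sin (phiL r h c) * cos \<theta>, sin (phiL r h c) * sin \<theta>,
                             cos (phiL r h c), 1]"

text \<open>TDOA Fisher information matrix of the first N satellites
  (satellites indexed 0..N-1), with cos phi_E values cs and azimuths ths.\<close>
definition tdoaFIM ::
  "real \<Rightarrow> real \<Rightarrow> real \<Rightarrow> real \<Rightarrow> real \<Rightarrow> (nat \<Rightarrow> real) \<Rightarrow> (nat \<Rightarrow> real) \<Rightarrow> nat \<Rightarrow> real^4^4" where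
  "tdoaFIM \<rho> \<eta> r h phiLmax cs ths N =
     (\<Sum>i<N. (if visible r h phiLmax (cs i) then satL \<rho> \<eta> r h (cs i) else 0) *\<^sub>R
        (\<chi> a b. augU r h (cs i) (ths i) $ a * augU r h (cs i) (ths i) $ b))"

definition Dmax :: "real \<Rightarrow> real \<Rightarrow> real \<Rightarrow> real" where
  "Dmax r h phiLmax = - r * cos phiLmax + sqrt (h^2 + 2 * h * r + r^2 * (cos phiLmax)^2)"

definition chimax :: "real \<Rightarrow> real \<Rightarrow> real \<Rightarrow> real" where
  "chimax r h phiLmax = ((r + h)^2 + r^2 - (Dmax r h phiLmax)^2) / (2 * r * (r + h))"

definition Atil :: "real \<Rightarrow> real \<Rightarrow> real \<Rightarrow> real \<Rightarrow> real \<Rightarrow> real" where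
  "Atil \<rho> \<eta> r h phiLmax = (let Dm = Dmax r h phiLmax; \<chi>m = chimax r h phiLmax in
     2 * \<rho> * \<eta> * (ln (Dm / h) * ((r + h)^2 + r^2) / (4 * r^3 * (r + h))
       - (1 - \<chi>m) * (Dm^2 + r * (r + h) * (1 + \<chi>m)) / (4 * r^2 * Dm^2)))"

definition Bc :: "real \<Rightarrow> real \<Rightarrow> real \<Rightarrow> real \<Rightarrow> real \<Rightarrow> real" where
  "Bc \<rho> \<eta> r h phiLmax = \<eta> * \<rho> / (r * (r + h)) * ln (Dmax r h phiLmax / h)"

definition Ec :: "real \<Rightarrow> real \<Rightarrow> real \<Rightarrow> real \<Rightarrow> real \<Rightarrow> real" where
  "Ec \<rho> \<eta> r h phiLmax = \<eta> * \<rho> / r^2 *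
     (1 - ((r + h) - r * chimax r h phiLmax) / Dmax r h phiLmax)"

definition Ctil :: "real \<Rightarrow> real \<Rightarrow> real \<Rightarrow> real \<Rightarrow> real \<Rightarrow> real" where
  "Ctil \<rho> \<eta> r h phiLmax = (let Dm = Dmax r h phiLmax; \<chi>m = chimax r h phiLmax; R = r + h in
     \<rho> * \<eta> * ((1 - \<chi>m) * ((R + r)^2 + Dm^2) / (4 * r^2 * Dm^2)
       - (R^2 - r^2) / (2 * r^3 * R) * ln (Dm / h)))"

end

theory Submission
  imports Defs
begin

lemma vec4:
  "(vector [x,y,z,w] :: real^4) $ 1 = x"
  "(vector [x,y,z,w] :: real^4) $ 2 = y"
  "(vector [x,y,z,w] :: real^4) $ 3 = z"
  "(vector [x,y,z,w] :: real^4) $ 4 = w"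
  unfolding vector_def by simp_all

lemma det_tendsto:
  fixes A :: "nat \<Rightarrow> real^'n^'n"
  assumes "\<And>i j. (\<lambda>n. A n $ i $ j) \<longlonglongrightarrow> B $ i $ j"
  shows "(\<lambda>n. det (A n)) \<longlonglongrightarrow> det B"
  unfolding det_def
  by (intro tendsto_intros assms)

lemma matrix_inv_unique:
  fixes A B :: "real^'n^'n"
  assumes "A ** B = mat 1"
  shows "matrix_inv A = B"
proof -
  have inv: "invertible A" using assms invertible_right_inverse by blast
  then have "A ** matrix_inv A = mat 1 \<and> matrix_inv A ** A = mat 1"
    unfolding invertible_def matrix_inv_def by (rule someI_ex)
  then have mi: "matrix_inv A ** A = mat 1" by simp
  have "matrix_inv A = matrix_inv A ** (A ** B)" by (simp add: assms)
  also have "\<dots> = (matrix_inv A ** A) ** B" by (simp add: matrix_mul_assoc)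
  finally show ?thesis by (simp add: mi)
qed

lemma matrix_inv_props:
  fixes A :: "real^'n^'n"
  assumes "det A \<noteq> 0"
  shows "A ** matrix_inv A = mat 1"
proof -
  have inv: "invertible A" using assms invertible_det_nz by blast
  then have "A ** matrix_inv A = mat 1 \<and> matrix_inv A ** A = mat 1"
    unfolding invertible_def matrix_inv_def by (rule someI_ex)
  then show ?thesis by simp
qed

lemma matrix_inv_cramer:
  fixes A :: "real^'n^'n"
  assumes "det A \<noteq> 0"
  shows "matrix_inv A $ i $ j = det (\<chi> p q. if q = i then (if p = j then 1 else 0) else A $ p $ q) / det A"
proof -
  let ?b = "axis j (1::real)"
  have "A *v (matrix_inv A *v ?b) = ?b"
    by (simp add: matrix_vector_mul_assoc matrix_inv_props[OF assms])
  then have "matrix_inv A *v ?b = (\<chi> k. det(\<chi> p q. if q=k then ?b$p else A$p$q) / det A)"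
    using cramer[OF assms] by blast
  then have "(matrix_inv A *v ?b) $ i = det(\<chi> p q. if q=i then ?b$p else A$p$q) / det A"
    by simp
  moreover have "(matrix_inv A *v ?b) $ i = matrix_inv A $ i $ j"
    by (simp add: matrix_vector_mult_def axis_def if_distrib cong: if_cong)
  moreover have "(\<chi> p q. if q=i then ?b$p else A$p$q) = (\<chi> p q. if q = i then (if p = j then 1 else 0) else A $ p $ q)"
    by (simp add: axis_def vec_eq_iff)
  ultimately show ?thesis by simp
qed

lemma matrix_inv_tendsto:
  fixes A :: "nat \<Rightarrow> real^'n^'n"
  assumes lim: "\<And>i j. (\<lambda>n. A n $ i $ j) \<longlonglongrightarrow> B $ i $ j" and dB: "det B \<noteq> 0"
  shows "(\<lambda>n. matrix_inv (A n) $ i $ j) \<longlonglongrightarrow> matrix_inv B $ i $ j"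
proof -
  let ?N = "\<lambda>C::real^'n^'n. (\<chi> p q. if q = i then (if p = j then 1 else 0) else C $ p $ q) :: real^'n^'n"
  have d: "(\<lambda>n. det (A n)) \<longlonglongrightarrow> det B" by (rule det_tendsto[OF lim])
  have "(\<lambda>n. det (?N (A n))) \<longlonglongrightarrow> det (?N B)"
    by (rule det_tendsto) (auto intro: lim)
  then have t: "(\<lambda>n. det (?N (A n)) / det (A n)) \<longlonglongrightarrow> det (?N B) / det B"
    by (intro tendsto_divide d dB)
  have ev: "eventually (\<lambda>n. det (A n) \<noteq> 0) sequentially"
    using tendsto_imp_eventually_ne[OF d dB] .
  have ev2: "eventually (\<lambda>n. det (?N (A n)) / det (A n) = matrix_inv (A n) $ i $ j) sequentially"
    using ev by (rule eventually_mono) (simp add: matrix_inv_cramer)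
  show ?thesis
    unfolding matrix_inv_cramer[OF dB]
    by (rule Lim_transform_eventually[OF t ev2])
qed

lemma mat_scale_inv:
  fixes A B :: "real^'n^'n"
  assumes "A ** B = mat 1" "c \<noteq> 0"
  shows "(\<chi> i j. c * A $ i $ j) ** (\<chi> i j. B $ i $ j / c) = mat 1"
proof -
  have "(\<chi> i j. c * A $ i $ j) ** (\<chi> i j. B $ i $ j / c) = A ** B"
    using assms(2) by (simp add: matrix_matrix_mult_def vec_eq_iff sum_distrib_left)
  then show ?thesis using assms by simp
qed

lemma (in prob_space) slln_bounded:
  fixes Y :: "nat \<Rightarrow> 'a \<Rightarrow> real"
  assumes ind: "indep_vars (\<lambda>_. borel) Y UNIV"
    and bnd: "\<And>i \<omega>. \<omega> \<in> space M \<Longrightarrow> Y i \<omega> \<in> {-K..K}" and K: "K > 0"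
    and ex: "\<And>i. expectation (Y i) = \<mu>"
  shows "AE \<omega> in M. (\<lambda>n. (\<Sum>i<n. Y i \<omega>) / real n) \<longlonglongrightarrow> \<mu>"
proof -
  have rv[measurable]: "\<And>i. random_variable borel (Y i)"
    using ind unfolding indep_vars_def by blast
  define A where "A = (\<lambda>(e::real) n. {x\<in>space M. real n * e \<le> \<bar>(\<Sum>i<n. Y i x) - real n * \<mu>\<bar>})"
  have Ameas[measurable]: "A e n \<in> sets M" for e n unfolding A_def by measurable
  have bound: "prob (A e n) \<le> 2 * exp (- (e^2 / (2 * K^2))) ^ n" if e: "e > 0" for e n
  proof (cases "n = 0")
    case True
    have "prob (A e 0) \<le> 1" by (rule prob_le_1)
    then have "prob (A e 0) \<le> 2" by linarith
    then show ?thesis using True by simp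
  next
    case False
    interpret H: Hoeffding_ineq M "{..<n}" Y "\<lambda>_. -K" "\<lambda>_. K" "real n * \<mu>"
    proof unfold_locales
      show "indep_vars (\<lambda>_. borel) Y {..<n}" using indep_vars_subset[OF ind] by blast
      show "\<And>i. i \<in> {..<n} \<Longrightarrow> AE x in M. Y i x \<in> {- K..K}"
        using bnd by auto
      show "real n * \<mu> \<equiv> \<Sum>i<n. expectation (Y i)" by (simp add: ex)
    qed auto
    have "prob (A e n) \<le> 2 * exp (-2 * (real n * e)\<^sup>2 / (\<Sum>i<n. (K - - K)\<^sup>2))"
      unfolding A_def
      by (rule H.Hoeffding_ineq_abs_ge) (use e K False in auto)
    also have "-2 * (real n * e)\<^sup>2 / (\<Sum>i<n. (K - - K)\<^sup>2) = real n * (- (e^2 / (2 * K^2)))"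
      using K False by (simp add: power2_eq_square field_simps)
    also have "exp (real n * (- (e^2 / (2 * K^2)))) = exp (- (e^2 / (2 * K^2))) ^ n"
      by (rule exp_of_nat_mult)
    finally show ?thesis .
  qed
  have AEe: "AE x in M. eventually (\<lambda>n. x \<in> space M - A e n) sequentially" if e: "e > 0" for e
  proof (rule borel_cantelli_AE1)
    show "\<And>n. A e n \<in> sets M" by simp
    show "\<And>n. emeasure M (A e n) < \<infinity>" by (simp add: less_top[symmetric])
    have q: "exp (- (e^2 / (2 * K^2))) < 1" using e K by simp
    show "summable (\<lambda>n. measure M (A e n))"
      by (rule summable_comparison_test[where g = "\<lambda>n. 2 * exp (- (e^2 / (2 * K^2))) ^ n"])
         (use bound[OF e] q in \<open>auto intro!: summable_mult summable_geometric\<close>)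
  qed
  have "AE x in M. \<forall>m::nat. eventually (\<lambda>n. x \<in> space M - A (1 / Suc m) n) sequentially"
    using AEe by (subst AE_all_countable) auto
  then show ?thesis
  proof (rule AE_mp[OF _ AE_I2], intro impI)
    fix x assume x: "x \<in> space M" and H: "\<forall>m::nat. eventually (\<lambda>n. x \<in> space M - A (1 / Suc m) n) sequentially"
    show "(\<lambda>n. (\<Sum>i<n. Y i x) / real n) \<longlonglongrightarrow> \<mu>"
    proof (rule LIMSEQ_I)
      fix r :: real assume "r > 0"
      then obtain m where m: "inverse (real (Suc m)) < r" using reals_Archimedean by blast
      from H[rule_format, of m] have "eventually (\<lambda>n. n \<ge> 1 \<and> x \<in> space M - A (1 / Suc m) n) sequentially"
        by (intro eventually_conj) (auto simp: eventually_sequentially)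
      then obtain N where N: "\<And>n. n \<ge> N \<Longrightarrow> n \<ge> 1 \<and> x \<in> space M - A (1 / Suc m) n"
        by (auto simp: eventually_sequentially)
      show "\<exists>no. \<forall>n\<ge>no. norm ((\<Sum>i<n. Y i x) / real n - \<mu>) < r"
      proof (intro exI allI impI)
        fix n assume "n \<ge> N"
        from N[OF this] x have n1: "n \<ge> 1" and lt: "\<bar>(\<Sum>i<n. Y i x) - real n * \<mu>\<bar> < real n * (1 / Suc m)"
          by (auto simp: A_def)
        have "(\<Sum>i<n. Y i x) / real n - \<mu> = ((\<Sum>i<n. Y i x) - real n * \<mu>) / real n"
          using n1 by (simp add: field_simps)
        then have "norm ((\<Sum>i<n. Y i x) / real n - \<mu>) = \<bar>(\<Sum>i<n. Y i x) - real n * \<mu>\<bar> / real n"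
          using n1 by simp
        also have "\<dots> < 1 / Suc m" using lt n1 by (simp add: divide_less_eq mult.commute)
        also have "\<dots> < r" using m by (simp add: inverse_eq_divide)
        finally show "norm ((\<Sum>i<n. Y i x) / real n - \<mu>) < r" .
      qed
    qed
  qed
qed

definition uu :: "real \<Rightarrow> real \<Rightarrow> real \<Rightarrow> real" where
  "uu r h c = (r + h)^2 + r^2 - 2 * r * (r + h) * c"

definition cph :: "real \<Rightarrow> real \<Rightarrow> real \<Rightarrow> real" where
  "cph r h c = ((r + h) * c - r) / satD r h c"

lemma satD_uu: "satD r h c = sqrt (uu r h c)" by (simp add: satD_def uu_def)

lemma uu_ge:
  assumes "r > 0" "h > 0" "c \<le> 1"
  shows "h^2 \<le> uu r h c"
proof -
  have "uu r h c - h^2 = 2 * r * (r + h) * (1 - c)" by (simp add: uu_def power2_eq_square algebra_simps)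
  moreover have "2 * r * (r + h) * (1 - c) \<ge> 0" using assms by simp
  ultimately show ?thesis by linarith
qed

lemma satD_ge:
  assumes "r > 0" "h > 0" "c \<le> 1"
  shows "h \<le> satD r h c" "satD r h c > 0" "(satD r h c)^2 = uu r h c"
proof -
  have u: "h^2 \<le> uu r h c" by (rule uu_ge[OF assms])
  then show "h \<le> satD r h c" unfolding satD_uu using assms(2) real_le_rsqrt by blast
  then show "satD r h c > 0" using assms by linarith
  show "(satD r h c)^2 = uu r h c" unfolding satD_uu using u
    by (metis real_sqrt_pow2 order_trans zero_le_power2)
qed

lemma cph_bound:
  assumes "r > 0" "h > 0" "-1 \<le> c" "c \<le> 1"
  shows "\<bar>cph r h c\<bar> \<le> 1"
proof -
  have D: "satD r h c > 0" "(satD r h c)^2 = uu r h c" using satD_ge assms by auto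
  have "((r + h) * c - r)^2 \<le> uu r h c"
  proof -
    have "uu r h c - ((r + h) * c - r)^2 = (r+h)^2 * (1 - c^2)" by (simp add: uu_def power2_eq_square algebra_simps)
    moreover have "c^2 \<le> 1" using assms by (simp add: abs_square_le_1)
    moreover have "(r+h)^2 * (1 - c^2) \<ge> 0" using \<open>c^2 \<le> 1\<close> by simp
    ultimately show ?thesis by linarith
  qed
  then have "\<bar>(r + h) * c - r\<bar> \<le> satD r h c"
    using D by (metis abs_le_square_iff abs_of_pos)
  then show ?thesis unfolding cph_def using D by (simp add: abs_divide divide_le_eq_1)
qed

lemma cos_phiL: "r > 0 \<Longrightarrow> h > 0 \<Longrightarrow> -1 \<le> c \<Longrightarrow> c \<le> 1 \<Longrightarrow> cos (phiL r h c) = cph r h c"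
  unfolding phiL_def cph_def[symmetric] using cph_bound by (simp add: cos_arccos_abs)

lemma sin_phiL: "r > 0 \<Longrightarrow> h > 0 \<Longrightarrow> -1 \<le> c \<Longrightarrow> c \<le> 1 \<Longrightarrow> sin (phiL r h c) = sqrt (1 - (cph r h c)^2)"
  unfolding phiL_def cph_def[symmetric] using cph_bound by (simp add: sin_arccos_abs)

lemma cos_pm_bounds:
  assumes p: "0 < phiLmax" "phiLmax < pi / 2"
  shows "0 < cos phiLmax" "cos phiLmax < 1"
proof -
  show "0 < cos phiLmax" using p by (intro cos_gt_zero_pi) auto
  have "cos phiLmax < cos 0" using p by (intro cos_monotone_0_pi) auto
  then show "cos phiLmax < 1" by simp
qed

lemma Dmax_props:
  assumes r: "r > 0" and h: "h > 0" and p: "0 < phiLmax" "phiLmax < pi / 2"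
  shows "h < Dmax r h phiLmax" "(Dmax r h phiLmax)^2 < (2*r+h)^2"
    "(Dmax r h phiLmax)^2 + 2 * r * cos phiLmax * Dmax r h phiLmax = h^2 + 2*h*r"
    "-1 < chimax r h phiLmax" "chimax r h phiLmax < 1"
proof -
  define z where "z = cos phiLmax"
  have z: "0 < z" "z < 1" unfolding z_def using cos_pm_bounds[OF p] by auto
  define S where "S = sqrt (h^2 + 2 * h * r + r^2 * z^2)"
  have S2: "S^2 = h^2 + 2 * h * r + r^2 * z^2" unfolding S_def using r h by (simp add: add_nonneg_nonneg)
  have Sp: "S > 0" unfolding S_def using r h z by (simp add: add_pos_nonneg)
  have Dm: "Dmax r h phiLmax = S - r * z" unfolding Dmax_def S_def z_def by simp
  have Srz: "S > r * z"
  proof -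
    have "0 < h^2 + 2*h*r" using r h by (simp add: add_pos_pos)
    then have "(r*z)^2 < S^2" using S2 by (simp add: power_mult_distrib)
    then show ?thesis using Sp power_less_imp_less_base[of "r*z" 2 S] by simp
  qed
  have key: "(Dmax r h phiLmax)^2 + 2 * r * z * Dmax r h phiLmax = h^2 + 2*h*r"
    unfolding Dm using S2 by (simp add: power2_eq_square algebra_simps)
  then show "(Dmax r h phiLmax)^2 + 2 * r * cos phiLmax * Dmax r h phiLmax = h^2 + 2*h*r"
    by (simp add: z_def)
  have Dpos: "Dmax r h phiLmax > 0" using Dm Srz by simp
  show hD: "h < Dmax r h phiLmax"
  proof (rule ccontr)
    assume "\<not> h < Dmax r h phiLmax"
    then have "Dmax r h phiLmax \<le> h" by simp
    then have "(Dmax r h phiLmax)^2 \<le> h^2" "2 * r * z * Dmax r h phiLmax \<le> 2 * r * z * h"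
      using Dpos r z by (auto intro!: power_mono mult_left_mono)
    moreover have "2 * r * z * h < 2 * h * r" using r h z by simp
    ultimately show False using key by linarith
  qed
  have "2 * r * z * Dmax r h phiLmax > 0" using Dpos r z by simp
  then have "(Dmax r h phiLmax)^2 < h^2 + 2*h*r" using key by linarith
  also have "\<dots> < (2*r+h)^2"
  proof -
    have "(2*r+h)^2 - (h^2 + 2*h*r) = 2*h*r + 4*r*r" by (simp add: power2_eq_square algebra_simps)
    moreover have "2*h*r + 4*r*r > 0" using r h by (simp add: add_pos_pos)
    ultimately show ?thesis by linarith
  qed
  finally show D2: "(Dmax r h phiLmax)^2 < (2*r+h)^2" .
  have den: "2 * r * (r + h) > 0" using r h by simp
  have "h^2 < (Dmax r h phiLmax)^2" using hD h by (simp add: power_strict_mono)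
  then show "chimax r h phiLmax < 1" unfolding chimax_def using den
    by (simp add: divide_less_eq power2_eq_square algebra_simps)
  show "-1 < chimax r h phiLmax" unfolding chimax_def using den D2
    by (simp add: less_divide_eq power2_eq_square algebra_simps)
qed

lemma visible_iff:
  assumes r: "r > 0" and h: "h > 0" and p: "0 < phiLmax" "phiLmax < pi / 2"
    and c: "-1 \<le> c" "c \<le> 1"
  shows "visible r h phiLmax c \<longleftrightarrow> chimax r h phiLmax \<le> c"
proof -
  define z where "z = cos phiLmax"
  have z: "0 < z" "z < 1" unfolding z_def using cos_pm_bounds[OF p] by auto
  define D where "D = satD r h c"
  define Dm where "Dm = Dmax r h phiLmax"
  have D: "D > 0" "D^2 = uu r h c" unfolding D_def using satD_ge r h c by auto
  have pm: "phiLmax = arccos z" unfolding z_def using p by (simp add: arccos_cos)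
  have "visible r h phiLmax c \<longleftrightarrow> arccos (cph r h c) \<le> arccos z"
    unfolding visible_def phiL_def cph_def[symmetric] pm ..
  also have "\<dots> \<longleftrightarrow> z \<le> cph r h c"
    using cph_bound[OF r h c] z by (intro arccos_le_mono) auto
  also have "\<dots> \<longleftrightarrow> z * D \<le> (r + h) * c - r"
    unfolding cph_def D_def[symmetric] using D by (simp add: le_divide_eq)
  also have "(r + h) * c - r = ((h^2 + 2*h*r) - D^2) / (2 * r)"
    using r unfolding D uu_def by (simp add: field_simps power2_eq_square)
  also have "z * D \<le> ((h^2 + 2*h*r) - D^2) / (2 * r) \<longleftrightarrow> D^2 + 2 * r * z * D - (h^2 + 2*h*r) \<le> 0"
    using r by (simp add: le_divide_eq algebra_simps)
  also have "D^2 + 2 * r * z * D - (h^2 + 2*h*r) = (D - Dm) * (D + Dm + 2 * r * z)"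
    using Dmax_props(3)[OF r h p] unfolding Dm_def z_def by (simp add: power2_eq_square algebra_simps)
  also have "(D - Dm) * (D + Dm + 2 * r * z) \<le> 0 \<longleftrightarrow> D \<le> Dm"
  proof -
    have "2 * r * z > 0" using r z by simp
    then have "D + Dm + 2 * r * z > 0" using D Dmax_props(1)[OF r h p] r z h unfolding Dm_def
      by linarith
    then show ?thesis by (simp add: mult_le_0_iff)
  qed
  also have "D \<le> Dm \<longleftrightarrow> D^2 \<le> Dm^2"
  proof -
    have "Dm > 0" using Dmax_props(1)[OF r h p] h unfolding Dm_def by linarith
    then show ?thesis using D abs_le_square_iff[of D Dm] by simp
  qed
  also have "\<dots> \<longleftrightarrow> chimax r h phiLmax \<le> c"
  proof -
    have den: "2 * r * (r + h) > 0" using r h by simp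
    show ?thesis unfolding chimax_def Dm_def[symmetric] D uu_def using den
      by (simp add: divide_le_eq algebra_simps)
  qed
  finally show ?thesis .
qed

lemma ftc_real:
  fixes F f :: "real \<Rightarrow> real"
  assumes "a \<le> b" "\<And>x. a \<le> x \<Longrightarrow> x \<le> b \<Longrightarrow> (F has_real_derivative f x) (at x)"
  shows "(f has_integral (F b - F a)) {a..b}"
  using assms by (intro fundamental_theorem_of_calculus)
    (auto simp: has_real_derivative_iff_has_vector_derivative[symmetric] intro: has_field_derivative_at_within)

lemma uu_pos: "r > 0 \<Longrightarrow> h > 0 \<Longrightarrow> c \<le> 1 \<Longrightarrow> uu r h c > 0"
  using uu_ge[of r h c] by (smt (verit) zero_less_power)

lemma uu_deriv: "((uu r h) has_real_derivative (- 2 * r * (r + h))) (at x)"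
  unfolding uu_def by (auto intro!: derivative_eq_intros)

lemma d_sqrt_uu:
  assumes "uu r h x > 0"
  shows "((\<lambda>c. sqrt (uu r h c)) has_real_derivative (-(r*(r+h)) / sqrt (uu r h x))) (at x)"
proof -
  have "((\<lambda>c. sqrt (uu r h c)) has_real_derivative (inverse (sqrt (uu r h x)) / 2 * (- 2 * r * (r + h)))) (at x)"
    using assms by (auto intro!: derivative_eq_intros uu_deriv)
  moreover have "inverse (sqrt (uu r h x)) / 2 * (- 2 * r * (r + h)) = (-(r*(r+h))) / sqrt (uu r h x)"
    using assms by (simp add: field_simps)
  ultimately show ?thesis by simp
qed

lemma d_ln_uu:
  assumes "uu r h x > 0"
  shows "((\<lambda>c. ln (uu r h c)) has_real_derivative (-2*r*(r+h)) / uu r h x) (at x)"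
proof -
  have "((\<lambda>c. ln (uu r h c)) has_real_derivative (- 2 * r * (r + h)) / uu r h x) (at x)"
    using assms by (auto intro!: derivative_eq_intros uu_deriv simp: field_simps)
  then show ?thesis by simp
qed

lemma d_inv_uu:
  assumes "uu r h x > 0"
  shows "((\<lambda>c. 1 / uu r h c) has_real_derivative (2*r*(r+h)) / (uu r h x)^2) (at x)"
proof -
  have "((\<lambda>c. inverse (uu r h c)) has_real_derivative - (inverse (uu r h x) * (- 2 * r * (r + h)) * inverse (uu r h x))) (at x)"
    using assms by (auto intro!: derivative_eq_intros uu_deriv)
  moreover have "- (inverse (uu r h x) * (- 2 * r * (r + h)) * inverse (uu r h x)) = (2*r*(r+h)) / (uu r h x)^2"
    using assms by (simp add: field_simps power2_eq_square)
  moreover have "(\<lambda>c. 1 / uu r h c) = (\<lambda>c. inverse (uu r h c))" by (simp add: inverse_eq_divide)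
  ultimately show ?thesis by metis
qed

lemma d_inv_sqrt_uu:
  assumes "uu r h x > 0"
  shows "((\<lambda>c. 1 / sqrt (uu r h c)) has_real_derivative (r*(r+h)) / (uu r h x * sqrt (uu r h x))) (at x)"
proof -
  have s: "sqrt (uu r h x) > 0" using assms by simp
  have "((\<lambda>c. inverse (sqrt (uu r h c))) has_real_derivative
         - (inverse (sqrt (uu r h x)) * (inverse (sqrt (uu r h x)) * (- 2 * r * (r + h)) / 2) * inverse (sqrt (uu r h x)))) (at x)"
    using s assms by (auto intro!: derivative_eq_intros uu_deriv)
  moreover have "- (inverse (sqrt (uu r h x)) * (inverse (sqrt (uu r h x)) * (- 2 * r * (r + h)) / 2) * inverse (sqrt (uu r h x)))
      = (r*(r+h)) / (uu r h x * sqrt (uu r h x))"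
  proof -
    have alg: "\<And>s u::real. s > 0 \<Longrightarrow> u = s * s \<Longrightarrow>
       - (inverse s * (inverse s * (- 2 * r * (r + h)) / 2) * inverse s) = (r*(r+h)) / (u * s)"
      by (simp add: field_simps)
    show ?thesis using alg[OF s] assms by simp
  qed
  moreover have "(\<lambda>c. 1 / sqrt (uu r h c)) = (\<lambda>c. inverse (sqrt (uu r h c)))" by (simp add: inverse_eq_divide)
  ultimately show ?thesis by metis
qed

lemma alg0: "(R::real) > 0 \<Longrightarrow> r > 0 \<Longrightarrow> u > 0 \<Longrightarrow> (-1 / (2*r*R)) * ((-2*r*R) / u) = 1 / u"
  by (simp add: field_simps)

lemma alg1: "(R::real) > 0 \<Longrightarrow> r > 0 \<Longrightarrow> u > 0 \<Longrightarrow> s > 0 \<Longrightarrow>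
      (1 / (2*r^2*R)) * ((R^2 - r^2) * ((r*R) / (u * s)) + (-(r*R)) / s)
        = ((R^2 - r^2 - u) / (2 * r)) / (u * s)"
  by (simp add: field_simps power2_eq_square)

lemma alg2: "(R::real) > 0 \<Longrightarrow> r > 0 \<Longrightarrow> u > 0 \<Longrightarrow>
      (1 / (8*r^3*R)) * ((R^2 - r^2)^2 * ((2*r*R) / u^2)
         + (2 * (R^2 - r^2)) * ((-2*r*R) / u) - (- 2 * r * R))
        = ((R^2 - r^2 - u) / (2 * r))^2 / u^2"
  by (simp add: field_simps power2_eq_square power3_eq_cube)

lemma int_g0:
  assumes r: "r > 0" and h: "h > 0" and a: "a \<le> 1"
  shows "((\<lambda>c. 1 / uu r h c) has_integral
          ((- ln (uu r h 1) / (2*r*(r+h))) - (- ln (uu r h a) / (2*r*(r+h))))) {a..1}"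
proof (rule ftc_real[OF a])
  fix x assume x: "a \<le> x" "x \<le> 1"
  have u: "uu r h x > 0" using uu_pos r h x by simp
  have "((\<lambda>c. (-1 / (2*r*(r+h))) * ln (uu r h c)) has_real_derivative (-1 / (2*r*(r+h))) * ((-2*r*(r+h)) / uu r h x)) (at x)"
    by (rule DERIV_cmult[OF d_ln_uu[OF u]])
  moreover have "(-1 / (2*r*(r+h))) * ((-2*r*(r+h)) / uu r h x) = 1 / uu r h x"
    using alg0[of "r+h" r "uu r h x"] r h u by simp
  moreover have "(\<lambda>c. (-1 / (2*r*(r+h))) * ln (uu r h c)) = (\<lambda>c. - ln (uu r h c) / (2*r*(r+h)))" by (simp add: field_simps)
  ultimately show "((\<lambda>c. - ln (uu r h c) / (2*r*(r+h))) has_real_derivative 1 / uu r h x) (at x)" by metis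
qed

lemma int_g1:
  assumes r: "r > 0" and h: "h > 0" and a: "a \<le> 1"
  defines "F \<equiv> \<lambda>c. (1 / (2*r^2*(r+h))) * (((r+h)^2 - r^2) * (1 / sqrt (uu r h c)) + sqrt (uu r h c))"
  shows "((\<lambda>c. ((r+h)*c - r) / (uu r h c * sqrt (uu r h c))) has_integral (F 1 - F a)) {a..1}"
proof (rule ftc_real[OF a])
  fix x assume x: "a \<le> x" "x \<le> 1"
  have u: "uu r h x > 0" using uu_pos r h x by simp
  have s: "sqrt (uu r h x) > 0" using u by simp
  have e: "(r + h) * x - r = ((r+h)^2 - r^2 - uu r h x) / (2 * r)"
    using r unfolding uu_def by (simp add: field_simps power2_eq_square)
  have "(F has_real_derivative (1 / (2*r^2*(r+h))) * (((r+h)^2 - r^2) * ((r*(r+h)) / (uu r h x * sqrt (uu r h x)))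
         + (-(r*(r+h))) / sqrt (uu r h x))) (at x)"
    unfolding F_def by (intro DERIV_cmult DERIV_add d_inv_sqrt_uu d_sqrt_uu u)
  moreover have "(1 / (2*r^2*(r+h))) * (((r+h)^2 - r^2) * ((r*(r+h)) / (uu r h x * sqrt (uu r h x)))
         + (-(r*(r+h))) / sqrt (uu r h x)) = ((r+h)*x - r) / (uu r h x * sqrt (uu r h x))"
  proof -
    show ?thesis unfolding e using alg1[of "r+h" r "uu r h x" "sqrt (uu r h x)"] r h s u by simp
  qed
  ultimately show "(F has_real_derivative ((r+h)*x - r) / (uu r h x * sqrt (uu r h x))) (at x)" by simp
qed

lemma int_g2:
  assumes r: "r > 0" and h: "h > 0" and a: "a \<le> 1"
  defines "F \<equiv> \<lambda>c. (1 / (8*r^3*(r+h))) * (((r+h)^2 - r^2)^2 * (1 / uu r h c) + (2 * ((r+h)^2 - r^2)) * ln (uu r h c) - uu r h c)"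
  shows "((\<lambda>c. ((r+h)*c - r)^2 / (uu r h c)^2) has_integral (F 1 - F a)) {a..1}"
proof (rule ftc_real[OF a])
  fix x assume x: "a \<le> x" "x \<le> 1"
  have u: "uu r h x > 0" using uu_pos r h x by simp
  have e: "(r + h) * x - r = ((r+h)^2 - r^2 - uu r h x) / (2 * r)"
    using r unfolding uu_def by (simp add: field_simps power2_eq_square)
  have "(F has_real_derivative (1 / (8*r^3*(r+h))) * (((r+h)^2 - r^2)^2 * ((2*r*(r+h)) / (uu r h x)^2)
         + (2 * ((r+h)^2 - r^2)) * ((-2*r*(r+h)) / uu r h x) - (- 2 * r * (r + h)))) (at x)"
    unfolding F_def by (intro DERIV_cmult DERIV_add DERIV_diff d_inv_uu d_ln_uu uu_deriv u)
  moreover have "(1 / (8*r^3*(r+h))) * (((r+h)^2 - r^2)^2 * ((2*r*(r+h)) / (uu r h x)^2)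
         + (2 * ((r+h)^2 - r^2)) * ((-2*r*(r+h)) / uu r h x) - (- 2 * r * (r + h)))
      = ((r+h)*x - r)^2 / (uu r h x)^2"
  proof -
    show ?thesis unfolding e using alg2[of "r+h" r "uu r h x"] r h u by simp
  qed
  ultimately show "(F has_real_derivative ((r+h)*x - r)^2 / (uu r h x)^2) (at x)" by simp
qed

lemma uniform_density:
  fixes S :: "real set"
  assumes S: "S \<in> sets borel" and m: "emeasure lborel S = ennreal m" "m > 0"
  shows "uniform_measure lborel S = density lborel (\<lambda>x. ennreal (indicator S x / m))"
  unfolding uniform_measure_def m(1)
proof (rule density_cong)
  show "(\<lambda>x. indicator S x / ennreal m) \<in> borel_measurable lborel" using S by measurable
  show "(\<lambda>x. ennreal (indicator S x / m)) \<in> borel_measurable lborel" using S by measurable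
  show "AE x in lborel. indicator S x / ennreal m = ennreal (indicator S x / m)"
    using m(2) by (intro AE_I2) (simp add: ennreal_indicator[symmetric] divide_ennreal)
qed

lemma integral_uniform:
  fixes S :: "real set" and f :: "real \<Rightarrow> real"
  assumes S: "S \<in> sets borel" and m: "emeasure lborel S = ennreal m" "m > 0"
    and f: "f \<in> borel_measurable borel"
  shows "integral\<^sup>L (uniform_measure lborel S) f = (\<integral>x. indicator S x * f x \<partial>lborel) / m"
proof -
  have "integral\<^sup>L (uniform_measure lborel S) f = (\<integral>x. (indicator S x / m) *\<^sub>R f x \<partial>lborel)"
    unfolding uniform_density[OF S m]
    by (rule integral_density) (use S f m in auto)
  also have "\<dots> = (\<integral>x. indicator S x * f x / m \<partial>lborel)" by simp
  also have "\<dots> = (\<integral>x. indicator S x * f x \<partial>lborel) / m" by (rule integral_divide_zero)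
  finally show ?thesis .
qed

lemma set_integral_hk:
  fixes f :: "real \<Rightarrow> real"
  assumes "continuous_on {a..b} f"
  shows "(\<integral>x. indicator {a..b} x * f x \<partial>lborel) = integral {a..b} f"
proof -
  have "(\<integral>x. indicator {a..b} x * f x \<partial>lborel) = (LINT x:{a..b}|lborel. f x)"
    by (simp add: set_lebesgue_integral_def)
  also have "\<dots> = integral {a..b} f"
    by (rule set_borel_integral_eq_integral(2)[OF borel_integrable_atLeastAtMost'[OF assms]])
  finally show ?thesis .
qed

definition cl :: "real \<Rightarrow> real" where "cl c = max (-1) (min 1 c)"

lemma cl_measurable[measurable]: "cl \<in> borel_measurable borel"
  unfolding cl_def by measurable

lemma E_unif_c:
  fixes \<phi> :: "real \<Rightarrow> real"
  assumes a: "-1 \<le> a" "a \<le> 1" and cont: "continuous_on {a..1} \<phi>" and meas: "\<phi> \<in> borel_measurable borel"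
  shows "integral\<^sup>L (uniform_measure lborel {-1..1}) (\<lambda>c. if a \<le> cl c then \<phi> (cl c) else 0) = integral {a..1} \<phi> / 2"
proof -
  have "integral\<^sup>L (uniform_measure lborel {-1..1}) (\<lambda>c. if a \<le> cl c then \<phi> (cl c) else 0)
      = (\<integral>x. indicator {-1..1} x * (if a \<le> cl x then \<phi> (cl x) else 0) \<partial>lborel) / 2"
    by (subst integral_uniform[where m=2]) (use meas in auto)
  also have "(\<lambda>x. indicator {-1..1} x * (if a \<le> cl x then \<phi> (cl x) else 0)) = (\<lambda>x. indicator {a..1} x * \<phi> x)"
    using a by (auto simp: indicator_def cl_def fun_eq_iff)
  also have "(\<integral>x. indicator {a..1} x * \<phi> x \<partial>lborel) = integral {a..1} \<phi>"
    by (rule set_integral_hk[OF cont])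
  finally show ?thesis .
qed

lemma E_unif_theta:
  fixes \<phi> :: "real \<Rightarrow> real"
  assumes cont: "continuous_on UNIV \<phi>"
  shows "integral\<^sup>L (uniform_measure lborel {0..<2*pi}) \<phi> = integral {0..2*pi} \<phi> / (2*pi)"
proof -
  have meas: "\<phi> \<in> borel_measurable borel" using cont by (rule borel_measurable_continuous_onI)
  have "integral\<^sup>L (uniform_measure lborel {0..<2*pi}) \<phi>
      = (\<integral>x. indicator {0..<2*pi} x * \<phi> x \<partial>lborel) / (2*pi)"
    by (subst integral_uniform[where m="2*pi"]) (use meas in auto)
  also have "(\<integral>x. indicator {0..<2*pi} x * \<phi> x \<partial>lborel) = (\<integral>x. indicator {0..2*pi} x * \<phi> x \<partial>lborel)"
  proof (rule integral_cong_AE)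
    show "AE x in lborel. indicator {0..<2*pi} x * \<phi> x = indicator {0..2*pi} x * \<phi> x"
      using AE_lborel_singleton[of "2*pi"] by eventually_elim (auto simp: indicator_def)
  qed (use meas in auto)
  also have "\<dots> = integral {0..2*pi} \<phi>"
    by (rule set_integral_hk) (rule continuous_on_subset[OF cont], simp)
  finally show ?thesis .
qed

lemma int_cos: "integral {0..2*pi} cos = 0"
proof -
  have "(cos has_integral (sin (2*pi) - sin 0)) {0..2*pi}"
    by (rule ftc_real) (auto intro!: derivative_eq_intros)
  then show ?thesis by (simp add: integral_unique)
qed

lemma int_sin: "integral {0..2*pi} sin = 0"
proof -
  have "(sin has_integral ((- cos (2*pi)) - (- cos 0))) {0..2*pi}"
    by (rule ftc_real) (auto intro!: derivative_eq_intros)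
  then show ?thesis by (simp add: integral_unique)
qed

lemma int_cos2: "integral {0..2*pi} (\<lambda>x. cos x * cos x) = pi"
proof -
  have "((\<lambda>x. cos x * cos x) has_integral ((2*pi + sin (2*pi) * cos (2*pi))/2 - (0 + sin 0 * cos 0)/2)) {0..2*pi}"
  proof (rule ftc_real)
    fix x :: real
    have e: "sin x * sin x = 1 - cos x * cos x" using sin_cos_squared_add3[of x] by linarith
    show "((\<lambda>x. (x + sin x * cos x) / 2) has_real_derivative cos x * cos x) (at x)"
      by (auto intro!: derivative_eq_intros simp: e field_simps)
  qed simp
  then show ?thesis by (simp add: integral_unique)
qed

lemma int_sin2: "integral {0..2*pi} (\<lambda>x. sin x * sin x) = pi"
proof -
  have "((\<lambda>x. sin x * sin x) has_integral ((2*pi - sin (2*pi) * cos (2*pi))/2 - (0 - sin 0 * cos 0)/2)) {0..2*pi}"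
  proof (rule ftc_real)
    fix x :: real
    have e: "cos x * cos x = 1 - sin x * sin x" using sin_cos_squared_add3[of x] by linarith
    show "((\<lambda>x. (x - sin x * cos x) / 2) has_real_derivative sin x * sin x) (at x)"
      by (auto intro!: derivative_eq_intros simp: e field_simps)
  qed simp
  then show ?thesis by (simp add: integral_unique)
qed

lemma int_cossin: "integral {0..2*pi} (\<lambda>x. cos x * sin x) = 0"
proof -
  have "((\<lambda>x. cos x * sin x) has_integral (sin (2*pi) * sin (2*pi) / 2 - sin 0 * sin 0 / 2)) {0..2*pi}"
    by (rule ftc_real) (auto intro!: derivative_eq_intros simp: field_simps)
  then show ?thesis by (simp add: integral_unique)
qed

lemma uu_one: "uu r h 1 = h^2" by (simp add: uu_def power2_eq_square algebra_simps)

lemma uu_chimax: "r > 0 \<Longrightarrow> h > 0 \<Longrightarrow> uu r h (chimax r h p) = (Dmax r h p)^2"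
proof -
  assume "r > 0" "h > 0"
  then have x: "2 * r * (r + h) \<noteq> 0" by simp
  have "\<And>x A D::real. x \<noteq> 0 \<Longrightarrow> A - x * ((A - D) / x) = D" by simp
  from this[OF x, of "(r + h)^2 + r^2" "(Dmax r h p)^2"]
  show ?thesis unfolding uu_def chimax_def by (simp add: mult.assoc)
qed

lemma algC: "(x::real) \<noteq> 0 \<Longrightarrow> y \<noteq> 0 \<Longrightarrow> (2*a - 2*b)/(2*x*y) = (a - b)/(x*y)"
  by (simp add: field_simps)

lemma algA: "(R::real) > r \<Longrightarrow> r > 0 \<Longrightarrow> D > 0 \<Longrightarrow>
  (1 / (2*r^2*R)) * ((R^2-r^2)*(1/(R-r)) + (R-r)) - (1/(2*r^2*R))*((R^2-r^2)*(1/D) + D)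
   = (1/r^2)*(1 - (R - r*((R^2+r^2-D^2)/(2*r*R)))/D)"
  by (simp add: field_simps power2_eq_square)

lemma algB: "(K::real) \<noteq> 0 \<Longrightarrow> (- (2 * a) / K) - (- (2 * b) / K) = 2 * (b - a) / K"
  by (simp add: field_simps)

lemma algD: "(R::real) > r \<Longrightarrow> r > 0 \<Longrightarrow> D > 0 \<Longrightarrow>
  (1 / (8*r^3*R)) * (((R + r)^2 + (2 * (R^2 - r^2)) * (2 * lh) - (R-r)^2)
     - ((R^2 - r^2)^2 * (1 / D^2) + (2 * (R^2 - r^2)) * (2 * lD) - D^2))
  = (1 - ((R^2+r^2-D^2)/(2*r*R))) * ((R + r)^2 + D^2) / (4 * r^2 * D^2)
       - (R^2 - r^2) / (2 * r^3 * R) * (lD - lh)"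
  by (simp add: field_simps power2_eq_square power3_eq_cube)

lemma algE: "(R::real) > r \<Longrightarrow> r > 0 \<Longrightarrow> D > 0 \<Longrightarrow>
  2 * \<rho> * \<eta> * (L * (R^2 + r^2) / (4 * r^3 * R)
       - (1 - ((R^2+r^2-D^2)/(2*r*R))) * (D^2 + r * R * (1 + ((R^2+r^2-D^2)/(2*r*R)))) / (4 * r^2 * D^2))
  = \<eta> * \<rho> * (L / (r * R) - ((1 - ((R^2+r^2-D^2)/(2*r*R))) * ((R + r)^2 + D^2) / (4 * r^2 * D^2)
       - (R^2 - r^2) / (2 * r^3 * R) * L))"
  by (simp add: field_simps power2_eq_square power3_eq_cube)

locale geo =
  fixes r h pm :: real
  assumes r: "r > 0" and h: "h > 0" and p0: "0 < pm" and p1: "pm < pi / 2"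
begin

abbreviation "cm \<equiv> chimax r h pm"
abbreviation "Dm \<equiv> Dmax r h pm"
abbreviation "R \<equiv> r + h"

definition "hk0 = integral {cm..1} (\<lambda>c. 1 / uu r h c)"
definition "hk1 = integral {cm..1} (\<lambda>c. cph r h c / uu r h c)"
definition "hk2 = integral {cm..1} (\<lambda>c. (cph r h c)^2 / uu r h c)"

lemma cm_bounds: "-1 < cm" "cm < 1" using Dmax_props[OF r h p0 p1] by auto
lemma Dm_gt: "h < Dm" using Dmax_props[OF r h p0 p1] by auto
lemma Dm_pos: "0 < Dm" using Dm_gt h by linarith

lemma hk0_eq: "hk0 = ln (Dm / h) / (r * R)"
proof -
  have "hk0 = (- ln (uu r h 1) / (2*r*(r+h))) - (- ln (uu r h cm) / (2*r*(r+h)))"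
    unfolding hk0_def using int_g0[OF r h less_imp_le[OF cm_bounds(2)]] by (rule integral_unique)
  also have "\<dots> = 2 * (ln Dm - ln h) / (2*r*(r+h))"
    unfolding uu_one uu_chimax[OF r h] using Dm_pos h r algB[of "2*r*(r+h)" "ln h" "ln Dm"]
    by (simp add: ln_realpow)
  also have "\<dots> = (ln Dm - ln h) / (r * R)"
    using algC[of r "r+h" "ln Dm" "ln h"] r h by (simp add: right_diff_distrib)
  also have "\<dots> = ln (Dm / h) / (r * R)"
    using Dm_pos h r by (simp add: ln_div)
  finally show ?thesis .
qed

lemma hk1_eq: "hk1 = (1 / r^2) * (1 - (R - r * cm) / Dm)"
proof -
  define F where "F \<equiv> \<lambda>c. (1 / (2*r^2*(r+h))) * (((r+h)^2 - r^2) * (1 / sqrt (uu r h c)) + sqrt (uu r h c))"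
  have "hk1 = integral {cm..1} (\<lambda>c. ((r+h)*c - r) / (uu r h c * sqrt (uu r h c)))"
    unfolding hk1_def
  proof (rule integral_cong)
    fix c assume "c \<in> {cm..1}"
    then have "uu r h c > 0" using uu_pos[OF r h] by auto
    then show "cph r h c / uu r h c = ((r+h)*c - r) / (uu r h c * sqrt (uu r h c))"
      by (simp add: cph_def satD_uu field_simps)
  qed
  also have "\<dots> = F 1 - F cm"
    unfolding F_def using int_g1[OF r h less_imp_le[OF cm_bounds(2)]] by (rule integral_unique)
  also have "\<dots> = (1 / r^2) * (1 - (R - r * cm) / Dm)"
  proof -
    have s1: "sqrt (uu r h 1) = (r+h) - r" unfolding uu_one using h by simp
    have s2: "sqrt (uu r h cm) = Dm" unfolding uu_chimax[OF r h] using Dm_pos by simp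
    have "F 1 - F cm = (1 / (2*r^2*(r+h))) * (((r+h)^2-r^2)*(1/((r+h)-r)) + ((r+h)-r))
        - (1/(2*r^2*(r+h)))*(((r+h)^2-r^2)*(1/Dm) + Dm)"
      unfolding F_def s1 s2 ..
    also have "\<dots> = (1/r^2)*(1 - ((r+h) - r*(((r+h)^2+r^2-Dm^2)/(2*r*(r+h))))/Dm)"
      by (rule algA) (use r h Dm_pos in auto)
    also have "\<dots> = (1 / r^2) * (1 - (R - r * cm) / Dm)" unfolding chimax_def ..
    finally show ?thesis .
  qed
  finally show ?thesis .
qed



lemma hk2_eq: "hk2 = (1 - cm) * ((R + r)^2 + Dm^2) / (4 * r^2 * Dm^2)
       - (R^2 - r^2) / (2 * r^3 * R) * ln (Dm / h)"
proof -
  define F where "F \<equiv> \<lambda>c. (1 / (8*r^3*(r+h))) * (((r+h)^2 - r^2)^2 * (1 / uu r h c) + (2 * ((r+h)^2 - r^2)) * ln (uu r h c) - uu r h c)"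
  have "hk2 = integral {cm..1} (\<lambda>c. ((r+h)*c - r)^2 / (uu r h c)^2)"
    unfolding hk2_def
  proof (rule integral_cong)
    fix c assume "c \<in> {cm..1}"
    then have u: "uu r h c > 0" using uu_pos[OF r h] by auto
    then have "(sqrt (uu r h c))^2 = uu r h c" by simp
    then show "(cph r h c)^2 / uu r h c = ((r+h)*c - r)^2 / (uu r h c)^2"
      using u by (simp add: cph_def satD_uu power_divide power2_eq_square)
  qed
  also have "\<dots> = F 1 - F cm"
    unfolding F_def using int_g2[OF r h less_imp_le[OF cm_bounds(2)]] by (rule integral_unique)
  also have "\<dots> = (1 - cm) * ((R + r)^2 + Dm^2) / (4 * r^2 * Dm^2)
       - (R^2 - r^2) / (2 * r^3 * R) * (ln Dm - ln h)"
  proof -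
    have l1: "ln (uu r h 1) = 2 * ln h" unfolding uu_one using h by (simp add: ln_realpow)
    have l2: "ln (uu r h cm) = 2 * ln Dm" unfolding uu_chimax[OF r h] using Dm_pos by (simp add: ln_realpow)
    have u1: "uu r h 1 = ((r+h) - r)^2" unfolding uu_one by simp
    have q: "((r+h)^2 - r^2)^2 * (1 / ((r+h)-r)^2) = ((r+h) + r)^2"
      using h by (simp add: field_simps power2_eq_square)
    have "F 1 - F cm = (1 / (8*r^3*(r+h))) * ((((r+h) + r)^2 + (2 * ((r+h)^2 - r^2)) * (2 * ln h) - ((r+h)-r)^2)
     - (((r+h)^2 - r^2)^2 * (1 / Dm^2) + (2 * ((r+h)^2 - r^2)) * (2 * ln Dm) - Dm^2))"
      unfolding F_def l1 l2 unfolding u1 uu_chimax[OF r h] q by (simp add: right_diff_distrib)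
    also have "\<dots> = (1 - (((r+h)^2+r^2-Dm^2)/(2*r*(r+h)))) * (((r+h) + r)^2 + Dm^2) / (4 * r^2 * Dm^2)
       - ((r+h)^2 - r^2) / (2 * r^3 * (r+h)) * (ln Dm - ln h)"
      by (rule algD) (use r h Dm_pos in auto)
    also have "\<dots> = (1 - cm) * ((R + r)^2 + Dm^2) / (4 * r^2 * Dm^2)
       - (R^2 - r^2) / (2 * r^3 * R) * (ln Dm - ln h)" unfolding chimax_def ..
    finally show ?thesis .
  qed
  also have "ln Dm - ln h = ln (Dm / h)" using Dm_pos h by (simp add: ln_div)
  finally show ?thesis .
qed

lemma Bc_hk: "Bc \<rho> \<eta> r h pm = \<eta> * \<rho> * hk0"
  unfolding Bc_def hk0_eq by simp

lemma Ec_hk: "Ec \<rho> \<eta> r h pm = \<eta> * \<rho> * hk1"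
  unfolding Ec_def hk1_eq by simp

lemma Ctil_hk: "Ctil \<rho> \<eta> r h pm = \<eta> * \<rho> * hk2"
  unfolding Ctil_def hk2_eq Let_def by simp

lemma Atil_hk: "Atil \<rho> \<eta> r h pm = \<eta> * \<rho> * (hk0 - hk2)"
proof -
  have "Atil \<rho> \<eta> r h pm = 2 * \<rho> * \<eta> * (ln (Dm / h) * ((r+h)^2 + r^2) / (4 * r^3 * (r+h))
       - (1 - (((r+h)^2+r^2-Dm^2)/(2*r*(r+h)))) * (Dm^2 + r * (r+h) * (1 + (((r+h)^2+r^2-Dm^2)/(2*r*(r+h))))) / (4 * r^2 * Dm^2))"
    unfolding Atil_def Let_def chimax_def ..
  also have "\<dots> = \<eta> * \<rho> * (ln (Dm / h) / (r * (r+h)) - ((1 - (((r+h)^2+r^2-Dm^2)/(2*r*(r+h)))) * (((r+h) + r)^2 + Dm^2) / (4 * r^2 * Dm^2)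
       - ((r+h)^2 - r^2) / (2 * r^3 * (r+h)) * ln (Dm / h)))"
    by (rule algE) (use r h Dm_pos in auto)
  also have "\<dots> = \<eta> * \<rho> * (hk0 - hk2)"
    unfolding hk0_eq hk2_eq chimax_def ..
  finally show ?thesis .
qed

end

lemma pos_int:
  fixes f :: "real \<Rightarrow> real"
  assumes "continuous_on {a..b} f" "a < b" "\<And>x. x \<in> {a..b} \<Longrightarrow> f x \<ge> 0" "x0 \<in> {a..b}" "f x0 \<noteq> 0"
  shows "integral {a..b} f > 0"
proof -
  have "integral {a..b} f \<ge> 0"
    by (rule integral_nonneg) (use assms integrable_continuous_interval in auto)
  moreover have "integral {a..b} f \<noteq> 0"
    using integral_eq_0_iff[OF assms(1,2,3)] assms(4,5) by blast
  ultimately show ?thesis by simp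
qed

context geo begin

lemma cont_uu: "continuous_on S (uu r h)" unfolding uu_def by (intro continuous_intros)

lemma uu_nz1: "x \<le> 1 \<Longrightarrow> uu r h x \<noteq> 0"
  using uu_pos[OF r h, of x] by auto

lemma uu_nz: "x \<in> {cm..1} \<Longrightarrow> uu r h x \<noteq> 0"
  using uu_pos[OF r h, of x] by auto

lemma cont_inv_uu: "continuous_on {cm..1} (\<lambda>c. 1 / uu r h c)"
  by (rule continuous_on_divide) (auto intro: continuous_on_const cont_uu simp: uu_nz1)

lemma cont_cph: "continuous_on {cm..1} (cph r h)"
proof -
  have "continuous_on {cm..1} (\<lambda>c. ((r + h) * c - r) / sqrt (uu r h c))"
    by (intro continuous_intros cont_uu) (auto simp: uu_nz1)
  then show ?thesis unfolding cph_def satD_uu .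
qed

lemma cph_one: "cph r h 1 = 1"
  unfolding cph_def satD_uu uu_one using h by simp

lemma cph_cm: "cph r h cm = cos pm"
proof -
  have key: "Dm^2 + 2 * r * cos pm * Dm = h^2 + 2*h*r" using Dmax_props(3)[OF r h p0 p1] .
  have "(r + h) * cm - r = cos pm * Dm"
  proof -
    have g: "\<And>x y A::real. x \<noteq> 0 \<Longrightarrow> y \<noteq> 0 \<Longrightarrow> y * (A / (2*x*y)) = A / (2*x)" by simp
    have "(r + h) * cm = ((r + h)^2 + r^2 - Dm^2) / (2 * r)"
      unfolding chimax_def using g[of r "r+h"] r h by simp
    then have e1: "2*r*((r+h)*cm) = (r+h)^2 + r^2 - Dm^2" using r by simp
    have "2*r*((r+h)*cm - r - cos pm * Dm) = 0"
      using e1 key by (simp add: algebra_simps power2_eq_square)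
    then show ?thesis using r by simp
  qed
  moreover have "satD r h cm = Dm" unfolding satD_uu uu_chimax[OF r h] using Dm_pos by simp
  ultimately show ?thesis unfolding cph_def using Dm_pos by simp
qed

lemma int_cont: fixes f :: "real \<Rightarrow> real" shows "continuous_on {cm..1} f \<Longrightarrow> f integrable_on {cm..1}"
  by (rule integrable_continuous_interval)

lemma hk0_pos: "hk0 > 0"
  unfolding hk0_eq using Dm_gt h r by (simp add: divide_pos_pos)

lemma cont_cph2: "continuous_on {cm..1} (\<lambda>c. (cph r h c)^2 / uu r h c)"
  by (rule continuous_on_divide) (auto intro: continuous_on_power cont_cph cont_uu simp: uu_nz1)

lemma cont_cph1: "continuous_on {cm..1} (\<lambda>c. cph r h c / uu r h c)"
  by (rule continuous_on_divide) (auto intro: cont_cph cont_uu simp: uu_nz1)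

lemma hkA_pos: "hk0 - hk2 > 0"
proof -
  have i1: "(\<lambda>c. 1 / uu r h c) integrable_on {cm..1}" by (rule int_cont[OF cont_inv_uu])
  have i2: "(\<lambda>c. (cph r h c)^2 / uu r h c) integrable_on {cm..1}"
      by (rule int_cont[OF cont_cph2])
  have "hk0 - hk2 = integral {cm..1} (\<lambda>c. 1 / uu r h c - (cph r h c)^2 / uu r h c)"
    unfolding hk0_def hk2_def by (rule integral_diff[OF i1 i2, symmetric])
  also have "\<dots> > 0"
  proof (rule pos_int)
    show "continuous_on {cm..1} (\<lambda>c. 1 / uu r h c - (cph r h c)^2 / uu r h c)"
      by (rule continuous_on_diff[OF cont_inv_uu cont_cph2])
    show "cm < 1" using cm_bounds by simp
    show "\<And>x. x \<in> {cm..1} \<Longrightarrow> 1 / uu r h x - (cph r h x)^2 / uu r h x \<ge> 0"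
    proof -
      fix x assume x: "x \<in> {cm..1}"
      then have u: "uu r h x > 0" using uu_pos[OF r h] by auto
      have "\<bar>cph r h x\<bar> \<le> 1" using cph_bound[OF r h] x cm_bounds by auto
      then have "(cph r h x)^2 \<le> 1" by (simp add: abs_square_le_1)
      then show "1 / uu r h x - (cph r h x)^2 / uu r h x \<ge> 0"
        using u by (simp add: diff_divide_distrib[symmetric])
    qed
    show "cm \<in> {cm..1}" using cm_bounds by simp
    have "(cos pm)^2 < 1" using cos_pm_bounds[OF p0 p1] by (simp add: abs_square_less_1)
    then show "1 / uu r h cm - (cph r h cm)^2 / uu r h cm \<noteq> 0"
      unfolding cph_cm using uu_pos[OF r h, of cm] cm_bounds
      by (simp add: diff_divide_distrib[symmetric])
  qed
  finally show ?thesis .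
qed

lemma hkQ_pos: "hk2 * hk0 - hk1^2 > 0"
proof -
  define t where "t = hk1 / hk0"
  have i0: "(\<lambda>c. 1 / uu r h c) integrable_on {cm..1}" by (rule int_cont[OF cont_inv_uu])
  have i1: "(\<lambda>c. cph r h c / uu r h c) integrable_on {cm..1}" by (rule int_cont[OF cont_cph1])
  have i2: "(\<lambda>c. (cph r h c)^2 / uu r h c) integrable_on {cm..1}" by (rule int_cont[OF cont_cph2])
  have eq: "\<And>c. (cph r h c - t)^2 / uu r h c = ((cph r h c)^2 / uu r h c - (2*t) * (cph r h c / uu r h c)) + t^2 * (1 / uu r h c)"
    by (simp add: power2_eq_square field_simps diff_divide_distrib add_divide_distrib)
  have "integral {cm..1} (\<lambda>c. (cph r h c - t)^2 / uu r h c) = (hk2 - (2*t) * hk1) + t^2 * hk0"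
  proof -
    have h0: "((\<lambda>c. 1 / uu r h c) has_integral hk0) {cm..1}" unfolding hk0_def by (rule integrable_integral[OF i0])
    have h1: "((\<lambda>c. cph r h c / uu r h c) has_integral hk1) {cm..1}" unfolding hk1_def by (rule integrable_integral[OF i1])
    have h2: "((\<lambda>c. (cph r h c)^2 / uu r h c) has_integral hk2) {cm..1}" unfolding hk2_def by (rule integrable_integral[OF i2])
    have "((\<lambda>c. ((cph r h c)^2 / uu r h c - (2*t) * (cph r h c / uu r h c)) + t^2 * (1 / uu r h c))
        has_integral ((hk2 - (2*t) * hk1) + t^2 * hk0)) {cm..1}"
      by (intro has_integral_add has_integral_diff has_integral_mult_right h0 h1 h2)
    then show ?thesis unfolding eq by (rule integral_unique)
  qed
  moreover have "integral {cm..1} (\<lambda>c. (cph r h c - t)^2 / uu r h c) > 0"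
  proof -
    obtain x0 where x0: "x0 \<in> {cm..1}" "cph r h x0 \<noteq> t"
    proof (cases "t = 1")
      case True
      have "cph r h cm \<noteq> t" unfolding cph_cm True using cos_pm_bounds[OF p0 p1] by simp
      then show ?thesis using that[of cm] cm_bounds by auto
    next
      case False
      then show ?thesis using that[of 1] cm_bounds cph_one by auto
    qed
    show ?thesis
    proof (rule pos_int)
      show "continuous_on {cm..1} (\<lambda>c. (cph r h c - t)^2 / uu r h c)"
      proof (rule continuous_on_divide)
        have "continuous_on {cm..1} (\<lambda>x. cph r h x - t)"
          by (rule continuous_on_diff[OF cont_cph continuous_on_const])
        then show "continuous_on {cm..1} (\<lambda>x. (cph r h x - t)^2)" by (rule continuous_on_power)
      qed (auto intro: cont_uu simp: uu_nz1)
      show "cm < 1" using cm_bounds by simp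
      show "\<And>x. x \<in> {cm..1} \<Longrightarrow> (cph r h x - t)^2 / uu r h x \<ge> 0"
        using uu_pos[OF r h] by (auto intro!: divide_nonneg_pos)
      show "x0 \<in> {cm..1}" by (rule x0)
      show "(cph r h x0 - t)^2 / uu r h x0 \<noteq> 0" using x0 uu_nz1 by auto
    qed
  qed
  ultimately have "hk2 - 2 * t * hk1 + t^2 * hk0 > 0" by simp
  then have "hk0 * (hk2 - 2 * t * hk1 + t^2 * hk0) > 0" using hk0_pos by simp
  moreover have "hk0 * (hk2 - 2 * t * hk1 + t^2 * hk0) = hk2 * hk0 - hk1^2"
    unfolding t_def using hk0_pos by (simp add: field_simps power2_eq_square)
  ultimately show ?thesis by simp
qed

end

definition spf :: "real \<Rightarrow> real \<Rightarrow> real \<Rightarrow> real" where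
  "spf r h c = sqrt (1 - (cph r h c)^2)"
definition ppf :: "real \<Rightarrow> real \<Rightarrow> 4 \<Rightarrow> real \<Rightarrow> real" where
  "ppf r h a c = (if a = 1 \<or> a = 2 then spf r h c else if a = 3 then cph r h c else 1)"
definition qqf :: "4 \<Rightarrow> real \<Rightarrow> real" where
  "qqf a t = (if a = 1 then cos t else if a = 2 then sin t else 1)"
definition psi :: "real \<Rightarrow> real \<Rightarrow> real \<Rightarrow> real \<Rightarrow> 4 \<Rightarrow> 4 \<Rightarrow> real \<Rightarrow> real" where
  "psi \<rho> \<eta> r h a b c = 2 * \<eta> * \<rho> / uu r h c * ppf r h a c * ppf r h b c"
definition Fab :: "real \<Rightarrow> real \<Rightarrow> real \<Rightarrow> real \<Rightarrow> real \<Rightarrow> 4 \<Rightarrow> 4 \<Rightarrow> real \<Rightarrow> real" where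
  "Fab \<rho> \<eta> r h pm a b c = (if chimax r h pm \<le> cl c then psi \<rho> \<eta> r h a b (cl c) else 0)"
definition Gab :: "4 \<Rightarrow> 4 \<Rightarrow> real \<Rightarrow> real" where
  "Gab a b t = qqf a t * qqf b t"

lemma cph_meas[measurable]: "cph r h \<in> borel_measurable borel"
  unfolding cph_def satD_def by measurable

lemma ppf_meas[measurable]: "ppf r h a \<in> borel_measurable borel"
  unfolding ppf_def spf_def by measurable

lemma uu_meas[measurable]: "uu r h \<in> borel_measurable borel"
  unfolding uu_def by measurable

lemma psi_meas[measurable]: "psi \<rho> \<eta> r h a b \<in> borel_measurable borel"
  unfolding psi_def by measurable

lemma Fab_meas[measurable]: "Fab \<rho> \<eta> r h pm a b \<in> borel_measurable borel"
  unfolding Fab_def by measurable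

lemma cont_qqf: "continuous_on UNIV (qqf a)"
  unfolding qqf_def by (cases "a = 1"; cases "a = 2") (auto intro!: continuous_intros)

lemma cont_Gab: "continuous_on UNIV (Gab a b)"
  unfolding Gab_def[abs_def] by (intro continuous_on_mult cont_qqf)

lemma Gab_meas[measurable]: "Gab a b \<in> borel_measurable borel"
  by (rule borel_measurable_continuous_onI[OF cont_Gab])

lemma qqf_bound: "\<bar>qqf a t\<bar> \<le> 1" unfolding qqf_def by auto

lemma Gab_bound: "\<bar>Gab a b t\<bar> \<le> 1"
  unfolding Gab_def abs_mult using qqf_bound[of a t] qqf_bound[of b t]
  by (simp add: mult_le_one)

lemma cl_bounds: "-1 \<le> cl c" "cl c \<le> 1" "-1 \<le> c \<Longrightarrow> c \<le> 1 \<Longrightarrow> cl c = c"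
  unfolding cl_def by auto

lemma ppf_bound:
  assumes "r > 0" "h > 0" "-1 \<le> c" "c \<le> 1"
  shows "\<bar>ppf r h a c\<bar> \<le> 1"
proof -
  have cb: "\<bar>cph r h c\<bar> \<le> 1" by (rule cph_bound[OF assms])
  then have "(cph r h c)^2 \<le> 1" by (simp add: abs_square_le_1)
  then have "spf r h c \<le> 1" "spf r h c \<ge> 0" unfolding spf_def by auto
  then show ?thesis using cb unfolding ppf_def by auto
qed

lemma Fab_bound:
  assumes r: "r > 0" and h: "h > 0" and e: "\<eta> > 0" "\<rho> > 0"
  shows "\<bar>Fab \<rho> \<eta> r h pm a b c\<bar> \<le> 2 * \<eta> * \<rho> / h^2"
proof (cases "chimax r h pm \<le> cl c")
  case True
  let ?c = "cl c"
  have u: "h^2 \<le> uu r h ?c" by (rule uu_ge[OF r h cl_bounds(2)])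
  have hp: "h^2 > 0" using h by simp
  have up: "uu r h ?c > 0" using u hp by linarith
  have "\<bar>psi \<rho> \<eta> r h a b ?c\<bar> = 2 * \<eta> * \<rho> / uu r h ?c * (\<bar>ppf r h a ?c\<bar> * \<bar>ppf r h b ?c\<bar>)"
  proof -
    have "uu r h ?c > 0" using u hp by linarith
    then show ?thesis unfolding psi_def using e by (simp add: abs_mult)
  qed
  also have "\<dots> \<le> 2 * \<eta> * \<rho> / uu r h ?c * 1"
    using ppf_bound[OF r h cl_bounds(1,2)] e u hp up
    by (intro mult_left_mono mult_le_one) auto
  also have "\<dots> \<le> 2 * \<eta> * \<rho> / h^2"
    using u hp e by (simp add: frac_le)
  finally show ?thesis unfolding Fab_def using True by simp
next
  case False
  then show ?thesis unfolding Fab_def using e h by simp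
qed

lemma augU_eq:
  assumes "r > 0" "h > 0" "-1 \<le> c" "c \<le> 1"
  shows "augU r h c t $ a = ppf r h a c * qqf a t"
proof -
  have s: "sin (phiL r h c) = spf r h c" unfolding spf_def by (rule sin_phiL[OF assms])
  have co: "cos (phiL r h c) = cph r h c" by (rule cos_phiL[OF assms])
  show ?thesis
    using exhaust_4[of a]
    by (auto simp: augU_def vec4 s co ppf_def qqf_def)
qed

lemma entry_eq:
  assumes r: "r > 0" and h: "h > 0" and p: "0 < pm" "pm < pi / 2" and c: "-1 \<le> c" "c \<le> 1"
  shows "(if visible r h pm c then satL \<rho> \<eta> r h c else 0) * (augU r h c t $ a * augU r h c t $ b)
     = Fab \<rho> \<eta> r h pm a b c * Gab a b t"
proof -
  have clc: "cl c = c" using cl_bounds(3)[OF c] .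
  have sl: "satL \<rho> \<eta> r h c = 2 * \<eta> * \<rho> / uu r h c"
    unfolding satL_def using satD_ge(3)[OF r h c(2)] by simp
  show ?thesis
    unfolding Fab_def clc visible_iff[OF r h p c] sl augU_eq[OF r h c] psi_def Gab_def
    by (simp add: algebra_simps)
qed

locale geo2 = geo +
  fixes \<rho> \<eta> :: real
  assumes rho: "\<rho> > 0" and eta: "\<eta> > 0"
begin

lemma h0: "((\<lambda>c. 1 / uu r h c) has_integral hk0) {cm..1}"
  unfolding hk0_def by (rule integrable_integral[OF int_cont[OF cont_inv_uu]])
lemma h1: "((\<lambda>c. cph r h c / uu r h c) has_integral hk1) {cm..1}"
  unfolding hk1_def by (rule integrable_integral[OF int_cont[OF cont_cph1]])
lemma h2: "((\<lambda>c. (cph r h c)^2 / uu r h c) has_integral hk2) {cm..1}"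
  unfolding hk2_def by (rule integrable_integral[OF int_cont[OF cont_cph2]])

lemma cont_spf: "continuous_on {cm..1} (spf r h)"
proof -
  have "continuous_on {cm..1} (\<lambda>c. sqrt (1 - (cph r h c)^2))"
    by (intro continuous_on_compose2[OF continuous_on_real_sqrt, of _ "\<lambda>c. 1 - (cph r h c)^2"]
        continuous_on_diff continuous_on_const continuous_on_power cont_cph) (auto intro: cont_cph)
  then show ?thesis unfolding spf_def[abs_def] .
qed

lemma cont_ppf: "continuous_on {cm..1} (ppf r h a)"
proof -
  consider "a = 1 \<or> a = 2" | "a = 3" | "a = 4" using exhaust_4[of a] by auto
  then show ?thesis
  proof cases
    case 1 then have "ppf r h a = spf r h" by (auto simp: ppf_def[abs_def])
    then show ?thesis using cont_spf by simp
  next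
    case 2 then have "ppf r h a = cph r h" by (auto simp: ppf_def[abs_def])
    then show ?thesis using cont_cph by simp
  next
    case 3 then have "ppf r h a = (\<lambda>_. 1)" by (auto simp: ppf_def[abs_def])
    then show ?thesis by (simp add: continuous_on_const)
  qed
qed

lemma cont_psi: "continuous_on {cm..1} (psi \<rho> \<eta> r h a b)"
proof -
  have "continuous_on {cm..1} (\<lambda>c. 2 * \<eta> * \<rho> / uu r h c)"
    by (rule continuous_on_divide) (auto intro: continuous_on_const cont_uu simp: uu_nz1)
  then show ?thesis unfolding psi_def[abs_def]
    by (intro continuous_on_mult cont_ppf)
qed

definition "EF a b = integral\<^sup>L (uniform_measure lborel {-1..1}) (Fab \<rho> \<eta> r h pm a b)"
definition "EG a b = integral\<^sup>L (uniform_measure lborel {0..<2*pi}) (Gab a b)"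

lemma EF_eq: "EF a b = integral {cm..1} (psi \<rho> \<eta> r h a b) / 2"
  unfolding EF_def Fab_def[abs_def]
  by (rule E_unif_c) (use cm_bounds in \<open>auto intro: cont_psi\<close>)

lemma EF_on: "(\<And>c. c \<in> {cm..1} \<Longrightarrow> psi \<rho> \<eta> r h a b c = 2 * \<eta> * \<rho> * g c) \<Longrightarrow> (g has_integral v) {cm..1}
   \<Longrightarrow> EF a b = \<eta> * \<rho> * v"
proof -
  assume eq: "\<And>c. c \<in> {cm..1} \<Longrightarrow> psi \<rho> \<eta> r h a b c = 2 * \<eta> * \<rho> * g c" and g: "(g has_integral v) {cm..1}"
  have "integral {cm..1} (psi \<rho> \<eta> r h a b) = integral {cm..1} (\<lambda>c. 2 * \<eta> * \<rho> * g c)"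
    by (rule integral_cong) (rule eq)
  also have "\<dots> = 2 * \<eta> * \<rho> * v"
    by (rule integral_unique, rule has_integral_mult_right, rule g)
  finally show ?thesis unfolding EF_eq by simp
qed

lemma spf_sq: "c \<in> {cm..1} \<Longrightarrow> (spf r h c)^2 = 1 - (cph r h c)^2"
proof -
  assume c: "c \<in> {cm..1}"
  have "\<bar>cph r h c\<bar> \<le> 1" using cph_bound[OF r h] c cm_bounds by auto
  then have "(cph r h c)^2 \<le> 1" by (simp add: abs_square_le_1)
  then show ?thesis unfolding spf_def by simp
qed

lemma EF11: "EF 1 1 = \<eta> * \<rho> * (hk0 - hk2)"
proof (rule EF_on[where g = "\<lambda>c. 1 / uu r h c - (cph r h c)^2 / uu r h c"])
  fix c assume c: "c \<in> {cm..1}"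
  have "psi \<rho> \<eta> r h 1 1 c = 2 * \<eta> * \<rho> / uu r h c * (spf r h c)^2"
    by (simp add: psi_def ppf_def power2_eq_square)
  also have "\<dots> = 2 * \<eta> * \<rho> * (1 / uu r h c - (cph r h c)^2 / uu r h c)"
    unfolding spf_sq[OF c] by (simp add: diff_divide_distrib right_diff_distrib)
  finally show "psi \<rho> \<eta> r h 1 1 c = 2 * \<eta> * \<rho> * (1 / uu r h c - (cph r h c)^2 / uu r h c)" .
qed (intro has_integral_diff h0 h2)

lemma EF22: "EF 2 2 = \<eta> * \<rho> * (hk0 - hk2)"
proof (rule EF_on[where g = "\<lambda>c. 1 / uu r h c - (cph r h c)^2 / uu r h c"])
  fix c assume c: "c \<in> {cm..1}"
  have "psi \<rho> \<eta> r h 2 2 c = 2 * \<eta> * \<rho> / uu r h c * (spf r h c)^2"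
    by (simp add: psi_def ppf_def power2_eq_square)
  also have "\<dots> = 2 * \<eta> * \<rho> * (1 / uu r h c - (cph r h c)^2 / uu r h c)"
    unfolding spf_sq[OF c] by (simp add: diff_divide_distrib right_diff_distrib)
  finally show "psi \<rho> \<eta> r h 2 2 c = 2 * \<eta> * \<rho> * (1 / uu r h c - (cph r h c)^2 / uu r h c)" .
qed (intro has_integral_diff h0 h2)

lemma EF33: "EF 3 3 = \<eta> * \<rho> * hk2"
  by (rule EF_on[where g = "\<lambda>c. (cph r h c)^2 / uu r h c"]) (auto simp: psi_def ppf_def power2_eq_square intro: h2[unfolded power2_eq_square])

lemma EF34: "EF 3 4 = \<eta> * \<rho> * hk1"
  by (rule EF_on[where g = "\<lambda>c. cph r h c / uu r h c"]) (auto simp: psi_def ppf_def intro: h1)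

lemma EF43: "EF 4 3 = \<eta> * \<rho> * hk1"
  by (rule EF_on[where g = "\<lambda>c. cph r h c / uu r h c"]) (auto simp: psi_def ppf_def intro: h1)

lemma EF44: "EF 4 4 = \<eta> * \<rho> * hk0"
  by (rule EF_on[where g = "\<lambda>c. 1 / uu r h c"]) (auto simp: psi_def ppf_def intro: h0)

lemma EG_eq: "EG a b = integral {0..2*pi} (Gab a b) / (2*pi)"
  unfolding EG_def by (rule E_unif_theta[OF cont_Gab])

lemma int_one: "integral {0..2*pi} (\<lambda>x::real. 1) = 2 * pi" by simp

lemma EG_vals:
  "EG 1 1 = 1/2" "EG 2 2 = 1/2" "EG 1 2 = 0" "EG 2 1 = 0"
  "EG 1 3 = 0" "EG 1 4 = 0" "EG 3 1 = 0" "EG 4 1 = 0"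
  "EG 2 3 = 0" "EG 2 4 = 0" "EG 3 2 = 0" "EG 4 2 = 0"
  "EG 3 3 = 1" "EG 3 4 = 1" "EG 4 3 = 1" "EG 4 4 = 1"
  unfolding EG_eq Gab_def[abs_def] qqf_def
  by (simp_all add: int_cos int_sin int_cos2 int_sin2 int_cossin mult.commute[of "sin _" "cos _"])

end

context geo2 begin

definition "LM = ((\<chi> a b. EF a b * EG a b) :: real^4^4)"

abbreviation "At \<equiv> Atil \<rho> \<eta> r h pm"
abbreviation "Bb \<equiv> Bc \<rho> \<eta> r h pm"
abbreviation "Cc \<equiv> Ctil \<rho> \<eta> r h pm"
abbreviation "Ee \<equiv> Ec \<rho> \<eta> r h pm"

definition "IM = ((\<chi> a b.
   if a = 1 \<and> b = 1 then 2 / At else if a = 2 \<and> b = 2 then 2 / At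
   else if a = 3 \<and> b = 3 then Bb / (Cc * Bb - Ee^2)
   else if (a = 3 \<and> b = 4) \<or> (a = 4 \<and> b = 3) then - Ee / (Cc * Bb - Ee^2)
   else if a = 4 \<and> b = 4 then Cc / (Cc * Bb - Ee^2) else 0) :: real^4^4)"

lemma At_pos: "At > 0" unfolding Atil_hk using hkA_pos rho eta by simp

lemma Delta_pos: "Cc * Bb - Ee^2 > 0"
proof -
  have "Cc * Bb - Ee^2 = (\<eta> * \<rho>)^2 * (hk2 * hk0 - hk1^2)"
    unfolding Ctil_hk Bc_hk Ec_hk by (simp add: power2_eq_square algebra_simps)
  then show ?thesis using hkQ_pos rho eta by simp
qed

lemma LM_vals:
  "LM$1$1 = At/2" "LM$2$2 = At/2" "LM$1$2 = 0" "LM$2$1 = 0"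
  "LM$1$3 = 0" "LM$1$4 = 0" "LM$3$1 = 0" "LM$4$1 = 0"
  "LM$2$3 = 0" "LM$2$4 = 0" "LM$3$2 = 0" "LM$4$2 = 0"
  "LM$3$3 = Cc" "LM$3$4 = Ee" "LM$4$3 = Ee" "LM$4$4 = Bb"
  unfolding LM_def by (simp_all add: EG_vals EF11 EF22 EF33 EF34 EF43 EF44 Atil_hk Ctil_hk Ec_hk Bc_hk)

lemma LM_inv: "LM ** IM = mat 1"
proof -
  have A: "At \<noteq> 0" using At_pos by simp
  have D: "Cc * Bb - Ee^2 \<noteq> 0" using Delta_pos by simp
  have sq: "(Cc*Bb - Ee^2)^2 = Bb * (Bb * (Cc * Cc)) + Ee * (Ee * (Ee * Ee)) - 2 * (Bb * (Cc * (Ee * Ee)))"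
    by (simp add: power2_eq_square algebra_simps)
  have D2: "Bb * (Bb * (Cc * Cc)) + Ee * (Ee * (Ee * Ee)) \<noteq> 2 * (Bb * (Cc * (Ee * Ee)))"
    using sq D by auto
  show ?thesis
    unfolding matrix_matrix_mult_def mat_def vec_eq_iff forall_4 sum_4
    using A D D2 by (simp add: LM_vals IM_def field_simps power2_eq_square)
qed

lemma IM_vals: "matrix_inv LM $ 1 $ 1 + matrix_inv LM $ 2 $ 2 = 4 / At"
  "matrix_inv LM $ 3 $ 3 = Bb / (Cc * Bb - Ee^2)"
  unfolding matrix_inv_unique[OF LM_inv] IM_def by simp_all

lemma det_LM: "det LM \<noteq> 0"
  using LM_inv invertible_det_nz invertible_right_inverse by blast

end

locale mainloc = prob_space M + geo2 r h pm \<rho> \<eta>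
  for M :: "'s measure" and r h pm \<rho> \<eta> +
  fixes X :: "nat \<Rightarrow> 's \<Rightarrow> real" and \<Theta> :: "nat \<Rightarrow> 's \<Rightarrow> real"
  assumes Xm[measurable]: "\<And>i. X i \<in> borel_measurable M" and Tm[measurable]: "\<And>i. \<Theta> i \<in> borel_measurable M"
    and dX: "\<And>i. distr M lborel (X i) = uniform_measure lborel {-1..1}"
    and dT: "\<And>i. distr M lborel (\<Theta> i) = uniform_measure lborel {0..<2*pi}"
    and ind: "indep_vars (\<lambda>_. borel) (\<lambda>k. case k of Inl i \<Rightarrow> X i | Inr i \<Rightarrow> \<Theta> i) UNIV"
begin

abbreviation "Z \<equiv> (\<lambda>k. case k of Inl i \<Rightarrow> X i | Inr i \<Rightarrow> \<Theta> i)"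

lemma indXT: "indep_var borel (X i) borel (\<Theta> i)"
proof -
  define sel where "sel = (\<lambda>b::bool. if b then Inl i else (Inr i :: nat + nat))"
  have "indep_vars (\<lambda>b. PiM {sel b} (\<lambda>_. borel)) (\<lambda>b \<omega>. restrict (\<lambda>k. Z k \<omega>) {sel b}) UNIV"
    by (rule indep_vars_restrict[OF ind]) (auto simp: disjoint_family_on_def sel_def)
  then have "indep_vars (\<lambda>_. borel) (\<lambda>b \<omega>. (\<lambda>f. f (sel b)) (restrict (\<lambda>k. Z k \<omega>) {sel b})) UNIV"
    by (rule indep_vars_compose2) (rule measurable_component_singleton, simp)
  then have "indep_vars (\<lambda>_. borel) (\<lambda>b \<omega>. Z (sel b) \<omega>) UNIV" by simp
  moreover have "(\<lambda>b \<omega>. Z (sel b) \<omega>) = case_bool (X i) (\<Theta> i)"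
    by (auto simp: fun_eq_iff sel_def split: bool.split)
  moreover have "(\<lambda>_::bool. borel :: real measure) = case_bool borel borel"
    by (auto simp: fun_eq_iff split: bool.split)
  ultimately show ?thesis unfolding indep_var_def by simp
qed

lemma indY:
  fixes f g :: "real \<Rightarrow> real"
  assumes f[measurable]: "f \<in> borel_measurable borel" and g[measurable]: "g \<in> borel_measurable borel"
  shows "indep_vars (\<lambda>_. borel) (\<lambda>j \<omega>. f (X j \<omega>) * g (\<Theta> j \<omega>)) UNIV"
proof -
  have "indep_vars (\<lambda>j. PiM {Inl j, Inr j} (\<lambda>_. borel)) (\<lambda>j \<omega>. restrict (\<lambda>k. Z k \<omega>) {Inl j, Inr j}) UNIV"
    by (rule indep_vars_restrict[OF ind]) (auto simp: disjoint_family_on_def)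
  then have "indep_vars (\<lambda>_. borel) (\<lambda>j \<omega>. (\<lambda>F. f (F (Inl j)) * g (F (Inr j))) (restrict (\<lambda>k. Z k \<omega>) {Inl j, Inr j})) UNIV"
  proof (rule indep_vars_compose2)
    fix j :: nat
    have m1: "(\<lambda>F. F (Inl j)) \<in> measurable (PiM {Inl j, Inr j :: nat + nat} (\<lambda>_. borel :: real measure)) borel"
      by (rule measurable_component_singleton) simp
    have m2: "(\<lambda>F. F (Inr j)) \<in> measurable (PiM {Inl j, Inr j :: nat + nat} (\<lambda>_. borel :: real measure)) borel"
      by (rule measurable_component_singleton) simp
    show "(\<lambda>F. f (F (Inl j)) * g (F (Inr j))) \<in> borel_measurable (PiM {Inl j, Inr j} (\<lambda>_. borel))"
      by (intro borel_measurable_times measurable_compose[OF m1 f] measurable_compose[OF m2 g])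
  qed
  then show ?thesis by simp
qed

lemma expect_prod:
  fixes f g :: "real \<Rightarrow> real"
  assumes f[measurable]: "f \<in> borel_measurable borel" and g[measurable]: "g \<in> borel_measurable borel"
    and fb: "\<And>x. \<bar>f x\<bar> \<le> Bf" and gb: "\<And>x. \<bar>g x\<bar> \<le> Bg"
  shows "expectation (\<lambda>\<omega>. f (X j \<omega>) * g (\<Theta> j \<omega>))
     = integral\<^sup>L (uniform_measure lborel {-1..1}) f * integral\<^sup>L (uniform_measure lborel {0..<2*pi}) g"
proof -
  have iv: "indep_var borel (f \<circ> X j) borel (g \<circ> \<Theta> j)"
    by (rule indep_var_compose[OF indXT f g])
  have i1: "integrable M (f \<circ> X j)"
    by (rule integrable_const_bound[where B = Bf]) (auto simp: fb)
  have i2: "integrable M (g \<circ> \<Theta> j)"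
    by (rule integrable_const_bound[where B = Bg]) (auto simp: gb)
  have "expectation (\<lambda>\<omega>. f (X j \<omega>) * g (\<Theta> j \<omega>)) = expectation (\<lambda>\<omega>. (f \<circ> X j) \<omega> * (g \<circ> \<Theta> j) \<omega>)"
    by simp
  also have "\<dots> = expectation (f \<circ> X j) * expectation (g \<circ> \<Theta> j)"
    by (rule indep_var_lebesgue_integral[OF iv i1 i2])
  also have "expectation (f \<circ> X j) = integral\<^sup>L (distr M lborel (X j)) f"
    by (subst integral_distr) (auto simp: o_def)
  also have "expectation (g \<circ> \<Theta> j) = integral\<^sup>L (distr M lborel (\<Theta> j)) g"
    by (subst integral_distr) (auto simp: o_def)
  finally show ?thesis unfolding dX dT .
qed

lemma AE_X_range: "AE \<omega> in M. \<forall>i. X i \<omega> \<in> {-1..1}"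
proof -
  have "AE \<omega> in M. X i \<omega> \<in> {-1..1}" for i
  proof -
    have "AE x in distr M lborel (X i). x \<in> {-1..1}"
      unfolding dX by (rule AE_uniform_measureI) auto
    then show ?thesis by (subst (asm) AE_distr_iff) auto
  qed
  then show ?thesis by (subst AE_all_countable) auto
qed

definition "Yab a b j \<omega> = Fab \<rho> \<eta> r h pm a b (X j \<omega>) * Gab a b (\<Theta> j \<omega>)"

lemma slln_entry: "AE \<omega> in M. (\<lambda>n. (\<Sum>i<n. Yab a b i \<omega>) / real n) \<longlonglongrightarrow> LM $ a $ b"
proof -
  define K where "K = 2 * \<eta> * \<rho> / h^2"
  have Kp: "K > 0" unfolding K_def using rho eta h by simp
  have Fb: "\<And>c. \<bar>Fab \<rho> \<eta> r h pm a b c\<bar> \<le> K" unfolding K_def by (rule Fab_bound[OF r h eta rho])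
  show ?thesis
  proof (rule slln_bounded)
    show "indep_vars (\<lambda>_. borel) (Yab a b) UNIV"
      unfolding Yab_def[abs_def] by (rule indY) measurable
    show "\<And>i \<omega>. \<omega> \<in> space M \<Longrightarrow> Yab a b i \<omega> \<in> {-K..K}"
    proof -
      fix i \<omega>
      have "\<bar>Yab a b i \<omega>\<bar> \<le> K * 1" unfolding Yab_def abs_mult
        using Fb Gab_bound Kp by (intro mult_mono) auto
      then show "Yab a b i \<omega> \<in> {-K..K}" by (auto simp: abs_le_iff)
    qed
    show "K > 0" by (rule Kp)
    show "\<And>i. expectation (Yab a b i) = LM $ a $ b"
      unfolding Yab_def[abs_def] LM_def EF_def EG_def
      by (subst expect_prod[where Bf = K and Bg = 1]) (auto intro: Fb Gab_bound)
  qed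
qed

end

lemma tdoa_entry: "tdoaFIM \<rho> \<eta> r h pm cs ths N $ a $ b =
  (\<Sum>i<N. (if visible r h pm (cs i) then satL \<rho> \<eta> r h (cs i) else 0) *
      (augU r h (cs i) (ths i) $ a * augU r h (cs i) (ths i) $ b))"
  unfolding tdoaFIM_def by (simp add: sum_component)

context mainloc begin

lemma final_omega:
  fixes \<omega>
  assumes rng: "\<forall>i. X i \<omega> \<in> {-1..1}"
    and lim: "\<forall>ab\<in>UNIV. (\<lambda>n. (\<Sum>i<n. Yab (fst ab) (snd ab) i \<omega>) / real n) \<longlonglongrightarrow> LM $ fst ab $ snd ab"
  defines "T \<equiv> \<lambda>N. tdoaFIM \<rho> \<eta> r h pm (\<lambda>i. X i \<omega>) (\<lambda>i. \<Theta> i \<omega>) N"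
  shows "(\<lambda>N. real N * matrix_inv (T N) $ i $ j) \<longlonglongrightarrow> matrix_inv LM $ i $ j"
proof -
  have Tent: "T N $ a $ b = (\<Sum>k<N. Yab a b k \<omega>)" for N a b
    unfolding T_def tdoa_entry Yab_def
    by (rule sum.cong[OF refl], rule entry_eq[OF r h p0 p1]) (use rng in auto)
  define A where "A = (\<lambda>N. (\<chi> a b. T N $ a $ b / real N) :: real^4^4)"
  have Alim: "(\<lambda>n. A n $ a $ b) \<longlonglongrightarrow> LM $ a $ b" for a b
    using lim[rule_format, of "(a,b)"] unfolding A_def Tent by simp
  have inv_lim: "(\<lambda>n. matrix_inv (A n) $ i $ j) \<longlonglongrightarrow> matrix_inv LM $ i $ j"
    by (rule matrix_inv_tendsto[OF Alim det_LM])
  have dlim: "(\<lambda>n. det (A n)) \<longlonglongrightarrow> det LM" by (rule det_tendsto[OF Alim])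
  have ev: "eventually (\<lambda>n. det (A n) \<noteq> 0 \<and> n \<ge> 1) sequentially"
    using tendsto_imp_eventually_ne[OF dlim det_LM] by (intro eventually_conj) (auto simp: eventually_sequentially)
  have ev2: "eventually (\<lambda>n. matrix_inv (A n) $ i $ j = real n * matrix_inv (T n) $ i $ j) sequentially"
    using ev
  proof (rule eventually_mono)
    fix n assume n: "det (A n) \<noteq> 0 \<and> n \<ge> 1"
    then have np: "real n \<noteq> 0" by simp
    have TA: "T n = (\<chi> a b. real n * A n $ a $ b)"
      unfolding A_def using np by (simp add: vec_eq_iff)
    have "T n ** (\<chi> a b. matrix_inv (A n) $ a $ b / real n) = mat 1"
      unfolding TA by (rule mat_scale_inv[OF matrix_inv_props np]) (use n in simp)
    then have "matrix_inv (T n) = (\<chi> a b. matrix_inv (A n) $ a $ b / real n)"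
      by (rule matrix_inv_unique)
    then show "matrix_inv (A n) $ i $ j = real n * matrix_inv (T n) $ i $ j"
      using np by simp
  qed
  show ?thesis by (rule Lim_transform_eventually[OF inv_lim ev2])
qed

theorem final:
  "AE \<omega> in M.
     ((\<lambda>N. real N * (matrix_inv (tdoaFIM \<rho> \<eta> r h pm (\<lambda>i. X i \<omega>) (\<lambda>i. \<Theta> i \<omega>) N) $ 1 $ 1
                   + matrix_inv (tdoaFIM \<rho> \<eta> r h pm (\<lambda>i. X i \<omega>) (\<lambda>i. \<Theta> i \<omega>) N) $ 2 $ 2))
        \<longlonglongrightarrow> 4 / Atil \<rho> \<eta> r h pm)
   \<and> ((\<lambda>N. real N * matrix_inv (tdoaFIM \<rho> \<eta> r h pm (\<lambda>i. X i \<omega>) (\<lambda>i. \<Theta> i \<omega>) N) $ 3 $ 3)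
        \<longlonglongrightarrow> Bc \<rho> \<eta> r h pm /
             (Ctil \<rho> \<eta> r h pm * Bc \<rho> \<eta> r h pm - (Ec \<rho> \<eta> r h pm)^2))"
proof -
  have "AE \<omega> in M. \<forall>ab\<in>UNIV. (\<lambda>n. (\<Sum>i<n. Yab (fst ab) (snd ab) i \<omega>) / real n) \<longlonglongrightarrow> LM $ fst ab $ snd ab"
    by (rule AE_finite_allI) (auto intro: slln_entry)
  with AE_X_range show ?thesis
  proof eventually_elim
    case (elim \<omega>)
    note f = final_omega[OF elim(1) elim(2)]
    have "(\<lambda>N. real N * matrix_inv (tdoaFIM \<rho> \<eta> r h pm (\<lambda>i. X i \<omega>) (\<lambda>i. \<Theta> i \<omega>) N) $ 1 $ 1
            + real N * matrix_inv (tdoaFIM \<rho> \<eta> r h pm (\<lambda>i. X i \<omega>) (\<lambda>i. \<Theta> i \<omega>) N) $ 2 $ 2)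
          \<longlonglongrightarrow> matrix_inv LM $ 1 $ 1 + matrix_inv LM $ 2 $ 2"
      by (intro tendsto_add f)
    then show ?case using f[of 3 3] unfolding IM_vals by (simp add: distrib_left)
  qed
qed

end

theorem mainTheorem3:
  fixes M :: "'s measure" and X :: "nat \<Rightarrow> 's \<Rightarrow> real" and \<Theta> :: "nat \<Rightarrow> 's \<Rightarrow> real"
    and r h phiLmax \<rho> \<eta> :: real
  assumes "prob_space M"
    and "\<And>i. X i \<in> borel_measurable M" and "\<And>i. \<Theta> i \<in> borel_measurable M"
    and "\<And>i. distr M lborel (X i) = uniform_measure lborel {-1..1}"
    and "\<And>i. distr M lborel (\<Theta> i) = uniform_measure lborel {0..<2*pi}"
    and "prob_space.indep_vars M (\<lambda>_. borel)
           (\<lambda>k. case k of Inl i \<Rightarrow> X i | Inr i \<Rightarrow> \<Theta> i) UNIV"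
    and "r > 0" and "h > 0" and "0 < phiLmax" and "phiLmax < pi / 2"
    and "\<rho> > 0" and "\<eta> > 0"
  shows "AE \<omega> in M.
     ((\<lambda>N. real N * (matrix_inv (tdoaFIM \<rho> \<eta> r h phiLmax (\<lambda>i. X i \<omega>) (\<lambda>i. \<Theta> i \<omega>) N) $ 1 $ 1
                   + matrix_inv (tdoaFIM \<rho> \<eta> r h phiLmax (\<lambda>i. X i \<omega>) (\<lambda>i. \<Theta> i \<omega>) N) $ 2 $ 2))
        \<longlonglongrightarrow> 4 / Atil \<rho> \<eta> r h phiLmax)
   \<and> ((\<lambda>N. real N * matrix_inv (tdoaFIM \<rho> \<eta> r h phiLmax (\<lambda>i. X i \<omega>) (\<lambda>i. \<Theta> i \<omega>) N) $ 3 $ 3)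
        \<longlonglongrightarrow> Bc \<rho> \<eta> r h phiLmax /
             (Ctil \<rho> \<eta> r h phiLmax * Bc \<rho> \<eta> r h phiLmax - (Ec \<rho> \<eta> r h phiLmax)^2))"
  proof -
  interpret mainloc M r h phiLmax \<rho> \<eta> X \<Theta>
    by (intro mainloc.intro geo2.intro geo.intro geo2_axioms.intro mainloc_axioms.intro; (rule assms)?)
  show ?thesis by (rule final)
qed

end
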